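(* Every positive harmonic function $u$ on $\mathbb D$ is a Bekollé–Bonami $B_p$ weight for every $p>2$, i.e. $$\sup_Q\Big(\frac1{A(Q)}\int_Q u\,dA\Big)\Big(\frac1{A(Q)}\int_Q u^{-1/(p-1)}dA\Big)^{p-1}<\infty,$$ the supremum over all Carleson boxes $Q\subset\mathbb D$.
   Context: $dA$ is normalized area measure on $\mathbb D$; $m$ normalized Lebesgue measure on $\partial\mathbb D$, $|I|=m(I)$; a Carleson box is $Q(I)=\{z\in\mathbb D:1-|z|\le|I|,\ z/|z|\in I\}$ for an arc $I\subset\partial\mathbb D$. *)

theory Defs
  imports "HOL-Analysis.Analysis"
begin

definition pdx :: "(complex \<Rightarrow> real) \<Rightarrow> complex \<Rightarrow> real" where
  "pdx f z = deriv (\<lambda>t::real. f (z + complex_of_real t)) 0"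

definition pdy :: "(complex \<Rightarrow> real) \<Rightarrow> complex \<Rightarrow> real" where
  "pdy f z = deriv (\<lambda>t::real. f (z + \<i> * complex_of_real t)) 0"

definition harmonic_on :: "complex set \<Rightarrow> (complex \<Rightarrow> real) \<Rightarrow> bool" where
  "harmonic_on S u \<longleftrightarrow> open S \<and>
     (\<forall>z\<in>S. u differentiable (at z) \<and> pdx u differentiable (at z) \<and> pdy u differentiable (at z)) \<and>
     continuous_on S (pdx (pdx u)) \<and> continuous_on S (pdx (pdy u)) \<and>
     continuous_on S (pdy (pdx u)) \<and> continuous_on S (pdy (pdy u)) \<and>
     (\<forall>z\<in>S. pdx (pdx u) z + pdy (pdy u) z = 0)"

text \<open>Closed arc of the unit circle starting at angle a with angular length l (0 < l \<le> 2 pi);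
  its normalized length is l / (2 pi).\<close>
definition circ_arc :: "real \<Rightarrow> real \<Rightarrow> complex set" where
  "circ_arc a l = {cis t | t. a \<le> t \<and> t \<le> a + l}"

definition carleson_box :: "real \<Rightarrow> real \<Rightarrow> complex set" where
  "carleson_box a l = {z. norm z < 1 \<and> 1 - norm z \<le> l / (2 * pi) \<and> z / complex_of_real (norm z) \<in> circ_arc a l}"

definition is_carleson_box :: "complex set \<Rightarrow> bool" where
  "is_carleson_box Q \<longleftrightarrow> (\<exists>a l. 0 < l \<and> l \<le> 2 * pi \<and> Q = carleson_box a l)"

text \<open>Normalized area measure dA = dx dy / pi.\<close>
definition areaA :: "complex set \<Rightarrow> real" where
  "areaA Q = measure lborel Q / pi"

definition avgA :: "complex set \<Rightarrow> (complex \<Rightarrow> real) \<Rightarrow> real" where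
  "avgA Q f = (1 / areaA Q) * ((LINT z:Q|lborel. f z) / pi)"

text \<open>Bekolle-Bonami B_p condition; finiteness of the supremum includes finiteness
  (integrability) of both integrals over every box.\<close>
definition bekolle_bonami :: "real \<Rightarrow> (complex \<Rightarrow> real) \<Rightarrow> bool" where
  "bekolle_bonami p u \<longleftrightarrow> (\<exists>C. \<forall>Q. is_carleson_box Q \<longrightarrow>
      set_integrable lborel Q u \<and>
      set_integrable lborel Q (\<lambda>z. u z powr (- 1 / (p - 1))) \<and>
      avgA Q u * (avgA Q (\<lambda>z. u z powr (- 1 / (p - 1)))) powr (p - 1) \<le> C)"

end

theory Submission
  imports Defs "HOL-Complex_Analysis.Complex_Analysis"
begin

lemma measurable_Complex_pair[measurable]:
  assumes [measurable]: "f \<in> borel_measurable M" "g \<in> borel_measurable M"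
  shows "(\<lambda>x. Complex (f x) (g x)) \<in> borel_measurable M"
  unfolding Complex_eq by measurable

lemma lborel_complex_pair:
  "distr (lborel \<Otimes>\<^sub>M lborel) borel (\<lambda>(x,y). Complex x y) = (lborel :: complex measure)"
proof (rule lborel_eqI[symmetric])
  fix l u :: complex
  assume le: "\<And>b. b \<in> Basis \<Longrightarrow> l \<bullet> b \<le> u \<bullet> b"
  have le1: "Re l \<le> Re u" "Im l \<le> Im u" using le[of 1] le[of \<i>] by (auto simp: Basis_complex_def)
  have meas: "(\<lambda>(x,y). Complex x y) \<in> borel_measurable (lborel \<Otimes>\<^sub>M lborel)"
    by (simp add: case_prod_unfold)
  have pre: "(\<lambda>(x,y). Complex x y) -` box l u \<inter> space (lborel \<Otimes>\<^sub>M lborel) = {Re l<..<Re u} \<times> {Im l<..<Im u}"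
    by (auto simp: box_def Basis_complex_def space_pair_measure)
  show "emeasure (distr (lborel \<Otimes>\<^sub>M lborel) borel (\<lambda>(x,y). Complex x y)) (box l u) = (\<Prod>b\<in>Basis. (u - l) \<bullet> b)"
    using le1
    by (simp add: emeasure_distr[OF meas] pre lborel.emeasure_pair_measure_Times Basis_complex_def ennreal_mult)
qed simp

lemma nn_integral_complex_iter:
  fixes f :: "complex \<Rightarrow> ennreal"
  assumes [measurable]: "f \<in> borel_measurable borel"
  shows "(\<integral>\<^sup>+z. f z \<partial>lborel) = (\<integral>\<^sup>+x. \<integral>\<^sup>+y. f (Complex x y) \<partial>lborel \<partial>lborel)"
proof -
  have "(\<integral>\<^sup>+z. f z \<partial>lborel) = (\<integral>\<^sup>+z. f z \<partial>distr (lborel \<Otimes>\<^sub>M lborel) borel (\<lambda>(x,y). Complex x y))"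
    by (simp add: lborel_complex_pair)
  also have "\<dots> = (\<integral>\<^sup>+p. f (Complex (fst p) (snd p)) \<partial>(lborel \<Otimes>\<^sub>M lborel))"
    by (subst nn_integral_distr) (auto simp: case_prod_unfold)
  also have "\<dots> = (\<integral>\<^sup>+x. \<integral>\<^sup>+y. f (Complex x y) \<partial>lborel \<partial>lborel)"
    by (subst lborel.nn_integral_fst[symmetric]) auto
  finally show ?thesis .
qed

lemma nn_integral_incseq_sets:
  fixes f :: "'a::euclidean_space \<Rightarrow> ennreal"
  assumes inc: "incseq A" and [measurable]: "\<And>n. A n \<in> sets borel" "f \<in> borel_measurable borel"
  shows "(\<integral>\<^sup>+x. f x * indicator (\<Union>n. A n) x \<partial>lborel) = (SUP n. \<integral>\<^sup>+x. f x * indicator (A n) x \<partial>lborel)"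
proof -
  have pw: "(SUP n. f x * indicator (A n) x) = f x * indicator (\<Union>n. A n) x" for x
  proof (cases "x \<in> (\<Union>n. A n)")
    case True
    then obtain m where m: "x \<in> A m" by auto
    show ?thesis
    proof (rule antisym)
      show "(SUP n. f x * indicator (A n) x) \<le> f x * indicator (\<Union>n. A n) x"
        using True by (intro SUP_least) (auto simp: indicator_def)
      show "f x * indicator (\<Union>n. A n) x \<le> (SUP n. f x * indicator (A n) x)"
        using True m by (intro SUP_upper2[of m]) (auto simp: indicator_def)
    qed
  next
    case False
    then show ?thesis by (auto simp: indicator_def)
  qed
  have "incseq (\<lambda>n x. f x * indicator (A n) x)"
    using inc by (auto simp: incseq_def le_fun_def indicator_def mono_def subset_iff intro!: mult_left_mono)
  then have "(SUP n. \<integral>\<^sup>+x. f x * indicator (A n) x \<partial>lborel) = (\<integral>\<^sup>+x. (SUP n. f x * indicator (A n) x) \<partial>lborel)"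
    by (subst nn_integral_monotone_convergence_SUP) auto
  then show ?thesis by (simp add: pw)
qed

lemma borel_measurable_tan[measurable]: "(tan :: real \<Rightarrow> real) \<in> borel_measurable borel"
  unfolding tan_def by measurable

lemma tan_substitution:
  fixes K :: "real \<Rightarrow> ennreal"
  assumes [measurable]: "K \<in> borel_measurable borel"
  shows "(\<integral>\<^sup>+s. K s * ennreal (1 / (1 + s\<^sup>2)) \<partial>lborel) =
         (\<integral>\<^sup>+\<theta>. K (tan \<theta>) * indicator {-(pi/2)<..<pi/2} \<theta> \<partial>lborel)"
proof -
  define F where "F s = K s * ennreal (1 / (1 + s\<^sup>2))" for s
  have [measurable]: "F \<in> borel_measurable borel" unfolding F_def by measurable
  have step: "(\<integral>\<^sup>+s. F s * indicator {-real (Suc n)..real (Suc n)} s \<partial>lborel) =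
              (\<integral>\<^sup>+\<theta>. K (tan \<theta>) * indicator {arctan (-real (Suc n))..arctan (real (Suc n))} \<theta> \<partial>lborel)" for n
  proof -
    define a where "a = arctan (-real (Suc n))"
    define b where "b = arctan (real (Suc n))"
    have ab: "a < b" unfolding a_def b_def by (simp add: arctan_less_iff)
    have cos_nz: "cos x \<noteq> 0" if "x \<in> {a..b}" for x
    proof -
      have "-(pi/2) < x" "x < pi/2"
        using that arctan_lbound[of "-real (Suc n)"] arctan_ubound[of "real (Suc n)"]
        unfolding a_def b_def by auto
      then have "cos x > 0" by (intro cos_gt_zero_pi) auto
      then show ?thesis by simp
    qed
    have "(\<integral>\<^sup>+s. F s * indicator {tan a..tan b} s \<partial>lborel) =
          (\<integral>\<^sup>+x. F (tan x) * ennreal (inverse ((cos x)\<^sup>2)) * indicator {a..b} x \<partial>lborel)"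
    proof (rule nn_integral_substitution_aux)
      show "continuous_on {a..b} (\<lambda>x. inverse ((cos x)\<^sup>2))"
        using cos_nz by (intro continuous_intros) auto
    qed (use ab cos_nz in auto)
    also have "\<dots> = (\<integral>\<^sup>+x. K (tan x) * indicator {a..b} x \<partial>lborel)"
    proof (rule nn_integral_cong)
      fix x
      show "F (tan x) * ennreal (inverse ((cos x)\<^sup>2)) * indicator {a..b} x = K (tan x) * indicator {a..b} x"
      proof (cases "x \<in> {a..b}")
        case True
        have c: "cos x \<noteq> 0" using cos_nz[OF True] .
        have "1 + (tan x)\<^sup>2 = (inverse (cos x))\<^sup>2" using tan_sec c by blast
        then have e: "(1 / (1 + (tan x)\<^sup>2)) * inverse ((cos x)\<^sup>2) = 1"
          using c by (simp add: power_inverse)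
        have A0: "0 \<le> 1 / (1 + (tan x)\<^sup>2)" by (intro divide_nonneg_nonneg) auto
        have "ennreal (1 / (1 + (tan x)\<^sup>2)) * ennreal (inverse ((cos x)\<^sup>2)) = 1"
          by (simp only: ennreal_mult'[OF A0, symmetric] e ennreal_1)
        then have "F (tan x) * ennreal (inverse ((cos x)\<^sup>2)) = K (tan x)"
          unfolding F_def by (simp only: mult.assoc mult_1_right)
        then show ?thesis by simp
      qed simp
    qed
    finally show ?thesis unfolding a_def b_def by (simp add: tan_arctan)
  qed
  have U1: "(\<Union>n. {-real (Suc n)..real (Suc n)}) = UNIV"
  proof -
    have "x \<in> {-real (Suc (nat \<lceil>\<bar>x\<bar>\<rceil>))..real (Suc (nat \<lceil>\<bar>x\<bar>\<rceil>))}" for x :: real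
      by auto (linarith+)
    then show ?thesis by blast
  qed
  have U2: "(\<Union>n. {arctan (-real (Suc n))..arctan (real (Suc n))}) = {-(pi/2)<..<pi/2}"
  proof (intro equalityI subsetI)
    fix x assume "x \<in> (\<Union>n. {arctan (-real (Suc n))..arctan (real (Suc n))})"
    then obtain n where "arctan (-real (Suc n)) \<le> x" "x \<le> arctan (real (Suc n))" by auto
    then show "x \<in> {-(pi/2)<..<pi/2}"
      using arctan_lbound[of "-real (Suc n)"] arctan_ubound[of "real (Suc n)"] by auto
  next
    fix x assume x: "x \<in> {-(pi/2)<..<pi/2}"
    define n where "n = nat \<lceil>\<bar>tan x\<bar>\<rceil>"
    have "-real (Suc n) \<le> tan x" "tan x \<le> real (Suc n)" unfolding n_def by linarith+
    then have "arctan (-real (Suc n)) \<le> arctan (tan x)" "arctan (tan x) \<le> arctan (real (Suc n))"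
      by (simp_all add: arctan_le_iff)
    then show "x \<in> (\<Union>n. {arctan (-real (Suc n))..arctan (real (Suc n))})"
      using x arctan_tan[of x] by auto
  qed
  have inc1: "incseq (\<lambda>n. {-real (Suc n)..real (Suc n)})"
    by (auto simp: incseq_def)
  have inc2: "incseq (\<lambda>n. {arctan (-real (Suc n))..arctan (real (Suc n))})"
    by (auto simp: incseq_def arctan_le_iff intro: order_trans)
  have "(\<integral>\<^sup>+s. F s \<partial>lborel) = (\<integral>\<^sup>+s. F s * indicator (\<Union>n. {-real (Suc n)..real (Suc n)}) s \<partial>lborel)"
    by (simp only: U1) simp
  also have "\<dots> = (SUP n. \<integral>\<^sup>+s. F s * indicator {-real (Suc n)..real (Suc n)} s \<partial>lborel)"
    by (rule nn_integral_incseq_sets[OF inc1]) auto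
  also have "\<dots> = (SUP n. \<integral>\<^sup>+\<theta>. K (tan \<theta>) * indicator {arctan (-real (Suc n))..arctan (real (Suc n))} \<theta> \<partial>lborel)"
    by (simp only: step)
  also have "\<dots> = (\<integral>\<^sup>+\<theta>. K (tan \<theta>) * indicator (\<Union>n. {arctan (-real (Suc n))..arctan (real (Suc n))}) \<theta> \<partial>lborel)"
    by (rule nn_integral_incseq_sets[OF inc2, symmetric]) auto
  finally show ?thesis by (simp only: U2 F_def)
qed

definition Kpol :: "(complex \<Rightarrow> ennreal) \<Rightarrow> complex \<Rightarrow> ennreal" where
  "Kpol f w = (\<integral>\<^sup>+\<rho>. indicator {0<..} \<rho> * ennreal \<rho> * (f (of_real \<rho> * w) + f (- (of_real \<rho> * w))) \<partial>lborel)"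

lemma abs_split_integral:
  fixes g :: "real \<Rightarrow> ennreal"
  assumes [measurable]: "g \<in> borel_measurable borel"
  shows "(\<integral>\<^sup>+\<rho>. ennreal \<bar>\<rho>\<bar> * g \<rho> \<partial>lborel) =
         (\<integral>\<^sup>+\<rho>. indicator {0<..} \<rho> * ennreal \<rho> * (g \<rho> + g (-\<rho>)) \<partial>lborel)"
proof -
  have "(\<integral>\<^sup>+\<rho>. ennreal \<bar>\<rho>\<bar> * g \<rho> \<partial>lborel) =
        (\<integral>\<^sup>+\<rho>. indicator {0<..} \<rho> * ennreal \<rho> * g \<rho> + indicator {..<0} \<rho> * ennreal (-\<rho>) * g \<rho> \<partial>lborel)"
    by (intro nn_integral_cong) (auto simp: indicator_def)
  also have "\<dots> = (\<integral>\<^sup>+\<rho>. indicator {0<..} \<rho> * ennreal \<rho> * g \<rho> \<partial>lborel) +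
                  (\<integral>\<^sup>+\<rho>. indicator {..<0} \<rho> * ennreal (-\<rho>) * g \<rho> \<partial>lborel)"
    by (rule nn_integral_add) auto
  also have "(\<integral>\<^sup>+\<rho>. indicator {..<0} \<rho> * ennreal (-\<rho>) * g \<rho> \<partial>lborel) =
             (\<integral>\<^sup>+\<rho>. indicator {0<..} \<rho> * ennreal \<rho> * g (-\<rho>) \<partial>lborel)"
    using nn_integral_real_affine[of "\<lambda>\<rho>. indicator {..<0} \<rho> * ennreal (-\<rho>) * g \<rho>" "-1" 0]
    by (simp add: indicator_def)
  also have "(\<integral>\<^sup>+\<rho>. indicator {0<..} \<rho> * ennreal \<rho> * g \<rho> \<partial>lborel) +
             (\<integral>\<^sup>+\<rho>. indicator {0<..} \<rho> * ennreal \<rho> * g (-\<rho>) \<partial>lborel) =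
             (\<integral>\<^sup>+\<rho>. indicator {0<..} \<rho> * ennreal \<rho> * g \<rho> + indicator {0<..} \<rho> * ennreal \<rho> * g (-\<rho>) \<partial>lborel)"
    by (rule nn_integral_add[symmetric]) auto
  also have "\<dots> = (\<integral>\<^sup>+\<rho>. indicator {0<..} \<rho> * ennreal \<rho> * (g \<rho> + g (-\<rho>)) \<partial>lborel)"
    by (intro nn_integral_cong) (simp add: distrib_left)
  finally show ?thesis .
qed

lemma polar_raw:
  fixes f :: "complex \<Rightarrow> ennreal"
  assumes [measurable]: "f \<in> borel_measurable borel"
  shows "(\<integral>\<^sup>+z. f z \<partial>lborel) = (\<integral>\<^sup>+\<theta>. Kpol f (cis \<theta>) * indicator {-(pi/2)<..<pi/2} \<theta> \<partial>lborel)"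
proof -
  define w where "w s = Complex (1 / sqrt (1 + s\<^sup>2)) (s / sqrt (1 + s\<^sup>2))" for s
  have [measurable]: "w \<in> borel_measurable borel" unfolding w_def by measurable
  have Kmeas[measurable]: "(\<lambda>s. Kpol f (w s)) \<in> borel_measurable borel"
    unfolding Kpol_def by measurable
  have "(\<integral>\<^sup>+z. f z \<partial>lborel) = (\<integral>\<^sup>+x. \<integral>\<^sup>+y. f (Complex x y) \<partial>lborel \<partial>lborel)"
    by (rule nn_integral_complex_iter) simp
  also have "\<dots> = (\<integral>\<^sup>+x. \<integral>\<^sup>+s. ennreal \<bar>x\<bar> * f (Complex x (x * s)) \<partial>lborel \<partial>lborel)"
  proof (rule nn_integral_cong_AE)
    show "AE x in lborel. (\<integral>\<^sup>+y. f (Complex x y) \<partial>lborel) = (\<integral>\<^sup>+s. ennreal \<bar>x\<bar> * f (Complex x (x * s)) \<partial>lborel)"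
    proof (rule eventually_mono[OF AE_lborel_singleton[of 0]])
      fix x :: real assume "x \<noteq> 0"
      then have "(\<integral>\<^sup>+y. f (Complex x y) \<partial>lborel) = ennreal \<bar>x\<bar> * (\<integral>\<^sup>+s. f (Complex x (0 + x * s)) \<partial>lborel)"
        by (intro nn_integral_real_affine) auto
      then show "(\<integral>\<^sup>+y. f (Complex x y) \<partial>lborel) = (\<integral>\<^sup>+s. ennreal \<bar>x\<bar> * f (Complex x (x * s)) \<partial>lborel)"
        by (simp add: nn_integral_cmult)
    qed
  qed
  also have "\<dots> = (\<integral>\<^sup>+s. \<integral>\<^sup>+x. ennreal \<bar>x\<bar> * f (Complex x (x * s)) \<partial>lborel \<partial>lborel)"
    by (rule lborel_pair.Fubini'[symmetric]) (simp add: case_prod_unfold)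
  also have "\<dots> = (\<integral>\<^sup>+s. Kpol f (w s) * ennreal (1 / (1 + s\<^sup>2)) \<partial>lborel)"
  proof (rule nn_integral_cong)
    fix s :: real
    define c where "c = 1 / sqrt (1 + s\<^sup>2)"
    have c0: "c > 0" unfolding c_def by (simp add: add_pos_nonneg)
    have c2: "c * c = 1 / (1 + s\<^sup>2)"
    proof -
      have "(sqrt (1 + s\<^sup>2))\<^sup>2 = 1 + s\<^sup>2" by (rule real_sqrt_pow2) simp
      then show ?thesis unfolding c_def by (simp add: power2_eq_square[symmetric] power_divide)
    qed
    have wc: "w s = Complex c (c * s)" unfolding w_def c_def by simp
    have "(\<integral>\<^sup>+x. ennreal \<bar>x\<bar> * f (Complex x (x * s)) \<partial>lborel) =
          ennreal c * (\<integral>\<^sup>+\<rho>. ennreal \<bar>c * \<rho>\<bar> * f (Complex (c * \<rho>) (c * \<rho> * s)) \<partial>lborel)"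
      using c0 nn_integral_real_affine[where c=c and t=0 and f="\<lambda>x. ennreal \<bar>x\<bar> * f (Complex x (x * s))"] by simp
    also have "\<dots> = (\<integral>\<^sup>+\<rho>. ennreal (c * c) * (ennreal \<bar>\<rho>\<bar> * f (of_real \<rho> * w s)) \<partial>lborel)"
    proof -
      have eq: "ennreal c * (ennreal \<bar>c * \<rho>\<bar> * f (Complex (c * \<rho>) (c * \<rho> * s))) =
                ennreal (c * c) * (ennreal \<bar>\<rho>\<bar> * f (of_real \<rho> * w s))" for \<rho>
      proof -
        have "Complex (c * \<rho>) (c * \<rho> * s) = of_real \<rho> * w s"
          unfolding wc by (simp add: complex_eq_iff)
        moreover have "ennreal c * ennreal \<bar>c * \<rho>\<bar> = ennreal (c * c) * ennreal \<bar>\<rho>\<bar>"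
          using c0 by (simp add: abs_mult ennreal_mult'[symmetric] mult_ac)
        ultimately show ?thesis by (simp add: mult.assoc[symmetric])
      qed
      show ?thesis
        by (subst nn_integral_cmult[symmetric]) (simp_all add: eq)
    qed
    also have "\<dots> = ennreal (c * c) * (\<integral>\<^sup>+\<rho>. ennreal \<bar>\<rho>\<bar> * f (of_real \<rho> * w s) \<partial>lborel)"
      by (rule nn_integral_cmult) simp
    also have "(\<integral>\<^sup>+\<rho>. ennreal \<bar>\<rho>\<bar> * f (of_real \<rho> * w s) \<partial>lborel) = Kpol f (w s)"
      unfolding Kpol_def by (subst abs_split_integral) auto
    finally show "(\<integral>\<^sup>+x. ennreal \<bar>x\<bar> * f (Complex x (x * s)) \<partial>lborel) = Kpol f (w s) * ennreal (1 / (1 + s\<^sup>2))"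
      by (simp add: c2 mult.commute)
  qed
  also have "\<dots> = (\<integral>\<^sup>+\<theta>. Kpol f (w (tan \<theta>)) * indicator {-(pi/2)<..<pi/2} \<theta> \<partial>lborel)"
    by (rule tan_substitution) simp
  also have "\<dots> = (\<integral>\<^sup>+\<theta>. Kpol f (cis \<theta>) * indicator {-(pi/2)<..<pi/2} \<theta> \<partial>lborel)"
  proof (rule nn_integral_cong)
    fix \<theta> :: real
    show "Kpol f (w (tan \<theta>)) * indicator {-(pi/2)<..<pi/2} \<theta> = Kpol f (cis \<theta>) * indicator {-(pi/2)<..<pi/2} \<theta>"
    proof (cases "\<theta> \<in> {-(pi/2)<..<pi/2}")
      case True
      then have cp: "cos \<theta> > 0" by (intro cos_gt_zero_pi) auto
      have "1 + (tan \<theta>)\<^sup>2 = (inverse (cos \<theta>))\<^sup>2" using tan_sec[of \<theta>] cp by linarith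
      then have "sqrt (1 + (tan \<theta>)\<^sup>2) = inverse (cos \<theta>)" using cp by simp
      then have "w (tan \<theta>) = cis \<theta>"
        unfolding w_def using cp by (simp add: complex_eq_iff tan_def divide_inverse)
      then show ?thesis by simp
    qed simp
  qed
  finally show ?thesis .
qed

lemma periodic_nat:
  assumes "\<And>x. H (x + 2*pi) = H x"
  shows "H (x + 2*pi*real n) = H x"
proof (induction n arbitrary: x)
  case (Suc n)
  have "H (x + 2*pi*real (Suc n)) = H ((x + 2*pi*real n) + 2*pi)" by (simp add: algebra_simps)
  also have "\<dots> = H (x + 2*pi*real n)" by (rule assms)
  finally show ?case using Suc by simp
qed simp

lemma periodic_int:
  assumes "\<And>x. H (x + 2*pi) = H x"
  shows "H (x + 2*pi * of_int k) = H x"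
proof (cases "k \<ge> 0")
  case True
  then obtain n where "k = int n" by (metis nonneg_eq_int)
  then show ?thesis using periodic_nat[of H, OF assms] by simp
next
  case False
  then obtain n where n: "k = - int n" by (metis neg_0_less_iff_less nonneg_eq_int less_le_not_le minus_minus not_le)
  have "H (x + 2*pi * of_int k) = H ((x + 2*pi * of_int k) + 2*pi*real n)" using periodic_nat[of H, OF assms] by simp
  also have "\<dots> = H x" using n by simp
  finally show ?thesis .
qed

lemma periodic_window:
  fixes H :: "real \<Rightarrow> ennreal"
  assumes [measurable]: "H \<in> borel_measurable borel" and per: "\<And>x. H (x + 2*pi) = H x"
  shows "(\<integral>\<^sup>+\<theta>. H \<theta> * indicator {c..<c+2*pi} \<theta> \<partial>lborel) = (\<integral>\<^sup>+\<theta>. H \<theta> * indicator {0..<2*pi} \<theta> \<partial>lborel)"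
proof -
  define k where "k = \<lfloor>c / (2*pi)\<rfloor>"
  define c' where "c' = c - 2*pi * of_int k"
  have k1: "of_int k \<le> c / (2*pi)" "c / (2*pi) < of_int k + 1" unfolding k_def by linarith+
  have c'0: "0 \<le> c'" using k1 unfolding c'_def by (simp add: field_simps)
  have c'1: "c' < 2*pi" using k1 unfolding c'_def by (simp add: field_simps)
  have "(\<integral>\<^sup>+\<theta>. H \<theta> * indicator {c..<c+2*pi} \<theta> \<partial>lborel) =
        (\<integral>\<^sup>+\<theta>. H (2*pi * of_int k + \<theta>) * indicator {c..<c+2*pi} (2*pi * of_int k + \<theta>) \<partial>lborel)"
    using nn_integral_real_affine[where c=1 and t="2*pi * of_int k" and f="\<lambda>\<theta>. H \<theta> * indicator {c..<c+2*pi} \<theta>"]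
    by simp
  also have "\<dots> = (\<integral>\<^sup>+\<theta>. H \<theta> * indicator {c'..<c'+2*pi} \<theta> \<partial>lborel)"
  proof (rule nn_integral_cong)
    fix \<theta>
    have "H (2*pi * of_int k + \<theta>) = H \<theta>" using periodic_int[of H, OF per, of \<theta> k] by (simp add: add.commute)
    moreover have "indicator {c..<c+2*pi} (2*pi * of_int k + \<theta>) = (indicator {c'..<c'+2*pi} \<theta> :: ennreal)"
      unfolding c'_def by (auto simp: indicator_def)
    ultimately show "H (2*pi * of_int k + \<theta>) * indicator {c..<c+2*pi} (2*pi * of_int k + \<theta>) = H \<theta> * indicator {c'..<c'+2*pi} \<theta>"
      by simp
  qed
  also have "\<dots> = (\<integral>\<^sup>+\<theta>. H \<theta> * indicator {c'..<2*pi} \<theta> + H \<theta> * indicator {2*pi..<c'+2*pi} \<theta> \<partial>lborel)"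
    using c'0 c'1 by (intro nn_integral_cong) (auto simp: indicator_def)
  also have "\<dots> = (\<integral>\<^sup>+\<theta>. H \<theta> * indicator {c'..<2*pi} \<theta> \<partial>lborel) + (\<integral>\<^sup>+\<theta>. H \<theta> * indicator {2*pi..<c'+2*pi} \<theta> \<partial>lborel)"
    by (rule nn_integral_add) auto
  also have "(\<integral>\<^sup>+\<theta>. H \<theta> * indicator {2*pi..<c'+2*pi} \<theta> \<partial>lborel) = (\<integral>\<^sup>+\<theta>. H \<theta> * indicator {0..<c'} \<theta> \<partial>lborel)"
  proof -
    have "(\<integral>\<^sup>+\<theta>. H \<theta> * indicator {2*pi..<c'+2*pi} \<theta> \<partial>lborel) =
          (\<integral>\<^sup>+\<theta>. H (2*pi + \<theta>) * indicator {2*pi..<c'+2*pi} (2*pi + \<theta>) \<partial>lborel)"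
      using nn_integral_real_affine[where c=1 and t="2*pi" and f="\<lambda>\<theta>. H \<theta> * indicator {2*pi..<c'+2*pi} \<theta>"]
      by simp
    also have "\<dots> = (\<integral>\<^sup>+\<theta>. H \<theta> * indicator {0..<c'} \<theta> \<partial>lborel)"
      using per by (intro nn_integral_cong) (auto simp: indicator_def add.commute)
    finally show ?thesis .
  qed
  also have "(\<integral>\<^sup>+\<theta>. H \<theta> * indicator {c'..<2*pi} \<theta> \<partial>lborel) + (\<integral>\<^sup>+\<theta>. H \<theta> * indicator {0..<c'} \<theta> \<partial>lborel) =
             (\<integral>\<^sup>+\<theta>. H \<theta> * indicator {c'..<2*pi} \<theta> + H \<theta> * indicator {0..<c'} \<theta> \<partial>lborel)"
    by (rule nn_integral_add[symmetric]) auto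
  also have "\<dots> = (\<integral>\<^sup>+\<theta>. H \<theta> * indicator {0..<2*pi} \<theta> \<partial>lborel)"
    using c'0 c'1 by (intro nn_integral_cong) (auto simp: indicator_def)
  finally show ?thesis .
qed

lemma borel_measurable_cis[measurable]: "cis \<in> borel_measurable borel"
  by (intro borel_measurable_continuous_onI continuous_intros)

definition Jpol :: "(complex \<Rightarrow> ennreal) \<Rightarrow> real \<Rightarrow> ennreal" where
  "Jpol f \<theta> = (\<integral>\<^sup>+\<rho>. indicator {0<..} \<rho> * ennreal \<rho> * f (of_real \<rho> * cis \<theta>) \<partial>lborel)"

lemma Jpol_measurable[measurable]:
  assumes [measurable]: "f \<in> borel_measurable borel"
  shows "Jpol f \<in> borel_measurable borel"
  unfolding Jpol_def by measurable

lemma cis_periodic2: "cis (x + 2*pi) = cis x"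
  by (simp add: complex_eq_iff)

lemma Jpol_periodic: "Jpol f (x + 2*pi) = Jpol f x"
  unfolding Jpol_def by (simp only: cis_periodic2)

lemma polar_window:
  fixes f :: "complex \<Rightarrow> ennreal"
  assumes [measurable]: "f \<in> borel_measurable borel"
  shows "(\<integral>\<^sup>+z. f z \<partial>lborel) = (\<integral>\<^sup>+\<theta>. Jpol f \<theta> * indicator {c..<c+2*pi} \<theta> \<partial>lborel)"
proof -
  have K: "Kpol f (cis \<theta>) = Jpol f \<theta> + Jpol f (\<theta> + pi)" for \<theta>
  proof -
    have "- (of_real \<rho> * cis \<theta>) = of_real \<rho> * cis (\<theta> + pi)" for \<rho>
      by (simp add: cis_def complex_eq_iff)
    then have "Kpol f (cis \<theta>) = (\<integral>\<^sup>+\<rho>. indicator {0<..} \<rho> * ennreal \<rho> * f (of_real \<rho> * cis \<theta>) +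
                 indicator {0<..} \<rho> * ennreal \<rho> * f (of_real \<rho> * cis (\<theta> + pi)) \<partial>lborel)"
      unfolding Kpol_def by (intro nn_integral_cong) (simp add: distrib_left)
    also have "\<dots> = Jpol f \<theta> + Jpol f (\<theta> + pi)"
      unfolding Jpol_def by (rule nn_integral_add) auto
    finally show ?thesis .
  qed
  have "(\<integral>\<^sup>+z. f z \<partial>lborel) = (\<integral>\<^sup>+\<theta>. Kpol f (cis \<theta>) * indicator {-(pi/2)<..<pi/2} \<theta> \<partial>lborel)"
    by (rule polar_raw) simp
  also have "\<dots> = (\<integral>\<^sup>+\<theta>. Jpol f \<theta> * indicator {-(pi/2)<..<pi/2} \<theta> + Jpol f (\<theta> + pi) * indicator {-(pi/2)<..<pi/2} \<theta> \<partial>lborel)"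
    by (intro nn_integral_cong) (simp add: K distrib_right)
  also have "\<dots> = (\<integral>\<^sup>+\<theta>. Jpol f \<theta> * indicator {-(pi/2)<..<pi/2} \<theta> \<partial>lborel) +
                  (\<integral>\<^sup>+\<theta>. Jpol f (\<theta> + pi) * indicator {-(pi/2)<..<pi/2} \<theta> \<partial>lborel)"
    by (rule nn_integral_add) auto
  also have "(\<integral>\<^sup>+\<theta>. Jpol f (\<theta> + pi) * indicator {-(pi/2)<..<pi/2} \<theta> \<partial>lborel) =
             (\<integral>\<^sup>+\<theta>. Jpol f \<theta> * indicator {pi/2<..<3*pi/2} \<theta> \<partial>lborel)"
  proof -
    have "(\<integral>\<^sup>+\<theta>. Jpol f \<theta> * indicator {pi/2<..<3*pi/2} \<theta> \<partial>lborel) =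
          (\<integral>\<^sup>+\<theta>. Jpol f (pi + \<theta>) * indicator {pi/2<..<3*pi/2} (pi + \<theta>) \<partial>lborel)"
      using nn_integral_real_affine[where c=1 and t="pi" and f="\<lambda>\<theta>. Jpol f \<theta> * indicator {pi/2<..<3*pi/2} \<theta>"]
      by simp
    also have "\<dots> = (\<integral>\<^sup>+\<theta>. Jpol f (\<theta> + pi) * indicator {-(pi/2)<..<pi/2} \<theta> \<partial>lborel)"
      by (intro nn_integral_cong) (auto simp: indicator_def add.commute)
    finally show ?thesis by simp
  qed
  also have "(\<integral>\<^sup>+\<theta>. Jpol f \<theta> * indicator {-(pi/2)<..<pi/2} \<theta> \<partial>lborel) +
             (\<integral>\<^sup>+\<theta>. Jpol f \<theta> * indicator {pi/2<..<3*pi/2} \<theta> \<partial>lborel) =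
             (\<integral>\<^sup>+\<theta>. Jpol f \<theta> * indicator {-(pi/2)<..<pi/2} \<theta> + Jpol f \<theta> * indicator {pi/2<..<3*pi/2} \<theta> \<partial>lborel)"
    by (rule nn_integral_add[symmetric]) auto
  also have "\<dots> = (\<integral>\<^sup>+\<theta>. Jpol f \<theta> * indicator {-(pi/2)..<-(pi/2)+2*pi} \<theta> \<partial>lborel)"
  proof (rule nn_integral_cong_AE)
    show "AE \<theta> in lborel. Jpol f \<theta> * indicator {-(pi/2)<..<pi/2} \<theta> + Jpol f \<theta> * indicator {pi/2<..<3*pi/2} \<theta> =
               Jpol f \<theta> * indicator {-(pi/2)..<-(pi/2)+2*pi} \<theta>"
      using AE_lborel_singleton[of "pi/2"] AE_lborel_singleton[of "-(pi/2)"]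
    proof eventually_elim
      case (elim \<theta>)
      then show ?case by (auto simp: indicator_def)
    qed
  qed
  also have "\<dots> = (\<integral>\<^sup>+\<theta>. Jpol f \<theta> * indicator {0..<2*pi} \<theta> \<partial>lborel)"
    by (rule periodic_window) (auto simp: Jpol_periodic)
  also have "\<dots> = (\<integral>\<^sup>+\<theta>. Jpol f \<theta> * indicator {c..<c+2*pi} \<theta> \<partial>lborel)"
    by (rule periodic_window[symmetric]) (auto simp: Jpol_periodic)
  finally show ?thesis .
qed

lemma kernel_identity:
  fixes e b :: complex
  assumes e1: "norm e = 1" and b1: "norm b < 1"
  shows "e / (e - b) + cnj b * e / (1 - cnj b * e) = of_real ((1 - (norm b)\<^sup>2) / (norm (e - b))\<^sup>2)"
proof -
  have ee: "e * cnj e = 1" using e1 by (metis complex_norm_square mult.commute norm_one of_real_1 power_one)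
  have eb: "e - b \<noteq> 0" using e1 b1 by auto
  have cb: "1 - cnj b * e \<noteq> 0"
  proof
    assume "1 - cnj b * e = 0"
    then have "norm (cnj b * e) = 1" by (metis norm_one right_minus_eq)
    then show False using e1 b1 by (simp add: norm_mult)
  qed
  have ce: "cnj (e - b) \<noteq> 0" using eb by simp
  have n2: "of_real ((norm (e - b))\<^sup>2) = (e - b) * cnj (e - b)" by (rule complex_norm_square)
  have nb: "of_real ((norm b)\<^sup>2) = b * cnj b" by (rule complex_norm_square)
  have "of_real ((1 - (norm b)\<^sup>2) / (norm (e - b))\<^sup>2) = (1 - b * cnj b) / ((e - b) * cnj (e - b))"
    by (simp only: of_real_divide of_real_diff of_real_1 n2 nb)
  also have "\<dots> = e / (e - b) + cnj b * e / (1 - cnj b * e)"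
  proof -
    have h: "1 - cnj b * e = e * cnj (e - b)" using ee by (simp add: algebra_simps)
    have e0: "e \<noteq> 0" using e1 by auto
    have "cnj b * e / (1 - cnj b * e) = cnj b / cnj (e - b)"
      unfolding h using e0 ce by (simp add: field_simps)
    moreover have "e / (e - b) + cnj b / cnj (e - b) = (e * cnj (e - b) + cnj b * (e - b)) / ((e - b) * cnj (e - b))"
      using eb ce by (simp add: field_simps)
    moreover have "e * cnj (e - b) + cnj b * (e - b) = 1 - b * cnj b"
      using ee by (simp add: algebra_simps)
    ultimately show ?thesis by simp
  qed
  finally show ?thesis by simp
qed

lemma poisson_complex:
  fixes G :: "complex \<Rightarrow> complex"
  assumes holo: "G holomorphic_on ball 0 R" and R: "R > 1" and b: "norm b < 1"
  shows "((\<lambda>t. of_real ((1 - (norm b)\<^sup>2) / (norm (cis (2*pi*t) - b))\<^sup>2) * G (cis (2*pi*t))) has_integral G b) {0..1}"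
proof -
  define R' where "R' = (if b = 0 then R else min R (1 / norm b))"
  have R'1: "R' > 1" using R b unfolding R'_def by (auto simp: field_simps)
  have R'R: "R' \<le> R" unfolding R'_def by auto
  have holo': "G holomorphic_on ball 0 R'" by (rule holomorphic_on_subset[OF holo]) (use R'R in auto)
  have c1: "((\<lambda>w. G w / (w - b)) has_contour_integral (2 * of_real pi * \<i> * G b)) (circlepath 0 1)"
    using b R'1 by (intro Cauchy_integral_circlepath_simple holomorphic_on_subset[OF holo']) auto
  have nz: "1 - cnj b * w \<noteq> 0" if "w \<in> ball 0 R'" for w
  proof
    assume "1 - cnj b * w = 0"
    then have n1: "norm b * norm w = 1" by (metis norm_one right_minus_eq norm_mult complex_mod_cnj)
    show False
    proof (cases "b = 0")
      case True then show False using n1 by simp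
    next
      case False
      then have "norm w < 1 / norm b" using that unfolding R'_def by auto
      then have "norm b * norm w < 1" using False by (simp add: field_simps)
      then show False using n1 by simp
    qed
  qed
  have c2: "((\<lambda>w. cnj b * G w / (1 - cnj b * w)) has_contour_integral 0) (circlepath 0 1)"
  proof (rule Cauchy_theorem_convex_simple[of _ "ball 0 R'"])
    show "(\<lambda>w. cnj b * G w / (1 - cnj b * w)) holomorphic_on ball 0 R'"
      using holo' nz by (intro holomorphic_intros) auto
    show "path_image (circlepath 0 1) \<subseteq> ball 0 R'" using R'1 by (auto simp: path_image_circlepath)
  qed auto
  have "((\<lambda>w. G w / (w - b) + cnj b * G w / (1 - cnj b * w)) has_contour_integral (2 * of_real pi * \<i> * G b)) (circlepath 0 1)"
    using has_contour_integral_add[OF c1 c2] by simp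
  note that_fact = this
  have I: "((\<lambda>t. (G (cis (2*pi*t)) / (cis (2*pi*t) - b) + cnj b * G (cis (2*pi*t)) / (1 - cnj b * cis (2*pi*t))) *
                  (2 * pi * \<i> * cis (2*pi*t))) has_integral (2 * of_real pi * \<i> * G b)) {0..1}"
  proof -
    have ex: "exp (2 * of_real pi * \<i> * of_real t) = cis (2*pi*t)" for t
      by (simp add: cis_conv_exp mult_ac)
    have cp: "circlepath 0 1 t = cis (2*pi*t)" for t
      by (simp add: circlepath ex)
    have vd: "vector_derivative (circlepath 0 1) (at t within {0..1}) = 2 * pi * \<i> * cis (2*pi*t)" if "t \<in> {0..1}" for t
      using vector_derivative_circlepath01[of t 0 1] that by (simp add: ex)
    show ?thesis using that_fact unfolding has_contour_integral_def
      by (rule has_integral_cong[THEN iffD1, rotated]) (simp add: vd cp)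
  qed
  have eq: "(G (cis (2*pi*t)) / (cis (2*pi*t) - b) + cnj b * G (cis (2*pi*t)) / (1 - cnj b * cis (2*pi*t))) *
                  (2 * pi * \<i> * cis (2*pi*t)) =
            (2 * of_real pi * \<i>) * (of_real ((1 - (norm b)\<^sup>2) / (norm (cis (2*pi*t) - b))\<^sup>2) * G (cis (2*pi*t)))" for t
  proof -
    have "(G (cis (2*pi*t)) / (cis (2*pi*t) - b) + cnj b * G (cis (2*pi*t)) / (1 - cnj b * cis (2*pi*t))) *
                  (2 * pi * \<i> * cis (2*pi*t)) =
          (2 * of_real pi * \<i>) * G (cis (2*pi*t)) * (cis (2*pi*t) / (cis (2*pi*t) - b) + cnj b * cis (2*pi*t) / (1 - cnj b * cis (2*pi*t)))"
      by (simp add: field_simps)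
    also have "\<dots> = (2 * of_real pi * \<i>) * (of_real ((1 - (norm b)\<^sup>2) / (norm (cis (2*pi*t) - b))\<^sup>2) * G (cis (2*pi*t)))"
      using kernel_identity[of "cis (2*pi*t)" b] b by simp
    finally show ?thesis .
  qed
  have "((\<lambda>t. (2 * of_real pi * \<i>) * (of_real ((1 - (norm b)\<^sup>2) / (norm (cis (2*pi*t) - b))\<^sup>2) * G (cis (2*pi*t))))
          has_integral (2 * of_real pi * \<i> * G b)) {0..1}"
    using I unfolding eq .
  then have "((\<lambda>t. inverse (2 * of_real pi * \<i>) * ((2 * of_real pi * \<i>) * (of_real ((1 - (norm b)\<^sup>2) / (norm (cis (2*pi*t) - b))\<^sup>2) * G (cis (2*pi*t)))))
          has_integral inverse (2 * of_real pi * \<i>) * (2 * of_real pi * \<i> * G b)) {0..1}"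
    by (rule has_integral_mult_right)
  moreover have cancel: "\<And>x. inverse (2 * of_real pi * \<i>) * ((2 * of_real pi * \<i>) * x) = (x::complex)"
    by (simp add: field_simps)
  ultimately show ?thesis by (simp only: cancel)
qed


definition Pk :: "complex \<Rightarrow> real \<Rightarrow> real" where
  "Pk b \<theta> = (1 - (norm b)\<^sup>2) / (norm (cis \<theta> - b))\<^sup>2"

lemma Pk_nonneg: "norm b < 1 \<Longrightarrow> 0 \<le> Pk b \<theta>"
proof -
  assume b: "norm b < 1"
  have "(norm b)\<^sup>2 \<le> 1" using b by (simp add: power_le_one less_imp_le)
  then show ?thesis unfolding Pk_def by (intro divide_nonneg_nonneg) auto
qed

lemma Pk_periodic: "Pk b (\<theta> + 2*pi) = Pk b \<theta>"
  unfolding Pk_def by (simp only: cis_periodic2)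

lemma poisson_nn:
  fixes F :: "complex \<Rightarrow> complex"
  assumes holo: "F holomorphic_on ball 0 1" and pos: "\<And>z. z \<in> ball 0 1 \<Longrightarrow> Re (F z) > 0"
    and \<rho>: "0 < \<rho>" "\<rho> < 1" and b: "norm b < 1"
  shows "(\<integral>\<^sup>+\<theta>. ennreal (Pk b \<theta> * Re (F (of_real \<rho> * cis \<theta>))) * indicator {c..<c+2*pi} \<theta> \<partial>lborel)
         = ennreal (2*pi * Re (F (of_real \<rho> * b)))"
proof -
  define G where "G w = F (of_real \<rho> * w)" for w
  have Gh: "G holomorphic_on ball 0 (1/\<rho>)"
  proof -
    have "(F \<circ> (\<lambda>w::complex. of_real \<rho> * w)) holomorphic_on ball 0 (1/\<rho>)"
    proof (rule holomorphic_on_compose_gen[OF _ holo])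
      show "(\<lambda>w. of_real \<rho> * w) holomorphic_on ball 0 (1/\<rho>)" by (intro holomorphic_intros)
      show "(\<lambda>w::complex. of_real \<rho> * w) ` ball 0 (1/\<rho>) \<subseteq> ball 0 1"
      proof
        fix y :: complex assume "y \<in> (\<lambda>w. of_real \<rho> * w) ` ball 0 (1/\<rho>)"
        then obtain w where w: "norm w < 1/\<rho>" "y = of_real \<rho> * w" by auto
        then have "\<rho> * norm w < 1" using \<rho> by (simp add: field_simps)
        then show "y \<in> ball 0 1" using w \<rho> by (simp add: norm_mult)
      qed
    qed
    then show ?thesis unfolding G_def o_def .
  qed
  have R: "1 / \<rho> > 1" using \<rho> by (simp add: field_simps)
  have pc: "((\<lambda>t. of_real ((1 - (norm b)\<^sup>2) / (norm (cis (2*pi*t) - b))\<^sup>2) * G (cis (2*pi*t))) has_integral G b) {0..1}"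
    by (rule poisson_complex[OF Gh R b])
  have "((\<lambda>t. Re (of_real ((1 - (norm b)\<^sup>2) / (norm (cis (2*pi*t) - b))\<^sup>2) * G (cis (2*pi*t)))) has_integral Re (G b)) {0..1}"
    using has_integral_linear[OF pc bounded_linear_Re] by (simp add: o_def)
  then have hi: "((\<lambda>t. Pk b (2*pi*t) * Re (F (of_real \<rho> * cis (2*pi*t)))) has_integral Re (F (of_real \<rho> * b))) {0..1}"
    unfolding G_def Pk_def by simp
  define g where "g \<theta> = Pk b \<theta> * Re (F (of_real \<rho> * cis \<theta>))" for \<theta>
  have gnn: "0 \<le> g \<theta>" for \<theta>
  proof -
    have "of_real \<rho> * cis \<theta> \<in> ball 0 1" using \<rho> by (simp add: norm_mult)
    then show ?thesis unfolding g_def using Pk_nonneg[OF b] pos by (simp add: less_imp_le)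
  qed
  have [measurable]: "g \<in> borel_measurable borel"
  proof -
    have "continuous_on UNIV g"
    proof -
      have c1: "continuous_on UNIV (\<lambda>\<theta>. Pk b \<theta>)"
      proof -
        have "cis \<theta> - b \<noteq> 0" for \<theta> using b by auto
        then show ?thesis unfolding Pk_def by (intro continuous_intros) auto
      qed
      have "continuous_on UNIV (\<lambda>\<theta>. of_real \<rho> * cis \<theta>)" by (intro continuous_intros)
      moreover have "continuous_on (range (\<lambda>\<theta>. of_real \<rho> * cis \<theta>)) F"
        by (rule continuous_on_subset[OF holomorphic_on_imp_continuous_on[OF holo]]) (use \<rho> in \<open>auto simp: norm_mult\<close>)
      ultimately have "continuous_on UNIV (\<lambda>\<theta>. F (of_real \<rho> * cis \<theta>))"
        using continuous_on_compose[of UNIV "\<lambda>\<theta>. of_real \<rho> * cis \<theta>" F] by (simp add: o_def)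
      then have cRe: "continuous_on UNIV (\<lambda>\<theta>. Re (F (of_real \<rho> * cis \<theta>)))" by (intro continuous_intros)
      show ?thesis using continuous_on_mult[OF c1 cRe] unfolding g_def .
    qed
    then show ?thesis by (rule borel_measurable_continuous_onI)
  qed
  have n1: "(\<integral>\<^sup>+t. ennreal (g (2*pi*t)) * indicator {0..1} t \<partial>lborel) = ennreal (Re (F (of_real \<rho> * b)))"
    using nn_integral_has_integral_lebesgue'[OF _ hi] gnn unfolding g_def by simp
  have "(\<integral>\<^sup>+\<theta>. ennreal (g \<theta>) * indicator {0..2*pi} \<theta> \<partial>lborel) =
        ennreal (2*pi) * (\<integral>\<^sup>+t. ennreal (g (0 + 2*pi*t)) * indicator {0..2*pi} (0 + 2*pi*t) \<partial>lborel)"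
    by (rule nn_integral_real_affine[where c="2*pi" and t=0, THEN trans]) auto
  also have "(\<integral>\<^sup>+t. ennreal (g (0 + 2*pi*t)) * indicator {0..2*pi} (0 + 2*pi*t) \<partial>lborel) =
             (\<integral>\<^sup>+t. ennreal (g (2*pi*t)) * indicator {0..1} t \<partial>lborel)"
  proof (intro nn_integral_cong)
    fix t :: real
    have p: "(0::real) < 2*pi" by simp
    have "0 \<le> 2*pi*t \<longleftrightarrow> 0 \<le> t" using p zero_le_mult_iff[of "2*pi" t] pi_gt_zero by linarith
    moreover have "2*pi*t \<le> 2*pi \<longleftrightarrow> t \<le> 1" using mult_le_cancel_left_pos[OF p, of t 1] by simp
    ultimately show "ennreal (g (0 + 2*pi*t)) * indicator {0..2*pi} (0 + 2*pi*t) = ennreal (g (2*pi*t)) * indicator {0..1} t"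
      by (simp add: indicator_def)
  qed
  finally have n2': "(\<integral>\<^sup>+\<theta>. ennreal (g \<theta>) * indicator {0..2*pi} \<theta> \<partial>lborel) = ennreal (2*pi) * ennreal (Re (F (of_real \<rho> * b)))"
    unfolding n1 .
  have "ennreal (2*pi * Re (F (of_real \<rho> * b))) = ennreal (2*pi) * ennreal (Re (F (of_real \<rho> * b)))"
    by (rule ennreal_mult') simp
  then have n2: "(\<integral>\<^sup>+\<theta>. ennreal (g \<theta>) * indicator {0..2*pi} \<theta> \<partial>lborel) = ennreal (2*pi * Re (F (of_real \<rho> * b)))"
    using n2' by simp
  have "(\<integral>\<^sup>+\<theta>. ennreal (g \<theta>) * indicator {c..<c+2*pi} \<theta> \<partial>lborel) =
        (\<integral>\<^sup>+\<theta>. ennreal (g \<theta>) * indicator {0..<2*pi} \<theta> \<partial>lborel)"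
  proof (rule periodic_window)
    show "(\<lambda>\<theta>. ennreal (g \<theta>)) \<in> borel_measurable borel" by measurable
    show "\<And>x. ennreal (g (x + 2*pi)) = ennreal (g x)" by (simp add: g_def Pk_periodic cis_periodic2)
  qed
  also have "\<dots> = (\<integral>\<^sup>+\<theta>. ennreal (g \<theta>) * indicator {0..2*pi} \<theta> \<partial>lborel)"
    by (intro nn_integral_cong_AE eventually_mono[OF AE_lborel_singleton[of "2*pi"]]) (auto simp: indicator_def)
  finally show ?thesis using n2 unfolding g_def by simp
qed

lemma circ_arc_closed: "closed (circ_arc a l)"
proof -
  have "circ_arc a l = cis ` {a..a+l}" unfolding circ_arc_def by auto
  moreover have "compact (cis ` {a..a+l})"
    by (intro compact_continuous_image continuous_intros) auto
  ultimately show ?thesis by (simp add: compact_imp_closed)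
qed

lemma carleson_box_borel[measurable]: "carleson_box a l \<in> sets borel"
proof -
  have [measurable]: "circ_arc a l \<in> sets borel" using circ_arc_closed by (rule borel_closed)
  show ?thesis unfolding carleson_box_def by measurable
qed

lemma carleson_box_sub: "carleson_box a l \<subseteq> ball 0 1"
  unfolding carleson_box_def by auto

lemma box_mem_polar:
  assumes \<rho>: "\<rho> > 0" and l: "0 < l" "l \<le> 2*pi" and \<theta>: "a \<le> \<theta>" "\<theta> < a + 2*pi"
  shows "of_real \<rho> * cis \<theta> \<in> carleson_box a l \<longleftrightarrow> \<rho> < 1 \<and> 1 - \<rho> \<le> l / (2*pi) \<and> \<theta> \<le> a + l"
proof -
  have n: "norm (of_real \<rho> * cis \<theta>) = \<rho>" using \<rho> by (simp add: norm_mult)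
  have d: "(of_real \<rho> * cis \<theta>) / complex_of_real \<rho> = cis \<theta>" using \<rho> by simp
  have arc: "cis \<theta> \<in> circ_arc a l \<longleftrightarrow> \<theta> \<le> a + l"
  proof
    assume "\<theta> \<le> a + l" then show "cis \<theta> \<in> circ_arc a l" using \<theta> unfolding circ_arc_def by auto
  next
    assume "cis \<theta> \<in> circ_arc a l"
    then obtain t where t: "cis \<theta> = cis t" "a \<le> t" "t \<le> a + l" unfolding circ_arc_def by auto
    have "sin t = sin \<theta> \<and> cos t = cos \<theta>" using t(1) by (metis cis.sel(1) cis.sel(2))
    then obtain n :: int where n: "t = \<theta> + 2 * pi * n" using sin_cos_eq_iff by blast
    show "\<theta> \<le> a + l"
    proof (rule ccontr)
      assume "\<not> \<theta> \<le> a + l"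
      then have h1: "-2*pi < 2*pi*n" "2*pi*n < 0" using n t \<theta> l by linarith+
      then have "n < 0" by (simp add: mult_less_0_iff)
      then have "real_of_int n \<le> -1" by simp
      then have "2*pi*real_of_int n \<le> 2*pi*(-1)" by (intro mult_left_mono) auto
      then show False using h1 by linarith
    qed
  qed
  show ?thesis unfolding carleson_box_def using n d arc by auto
qed

lemma box_polar:
  fixes g :: "complex \<Rightarrow> ennreal"
  assumes [measurable]: "g \<in> borel_measurable borel" and l: "0 < l" "l \<le> 2*pi"
  shows "(\<integral>\<^sup>+z. g z * indicator (carleson_box a l) z \<partial>lborel) =
         (\<integral>\<^sup>+\<theta>. indicator {a..a+l} \<theta> *
            (\<integral>\<^sup>+\<rho>. indicator {0<..<1} \<rho> * indicator {1 - l/(2*pi)..} \<rho> * ennreal \<rho> * g (of_real \<rho> * cis \<theta>) \<partial>lborel) \<partial>lborel)"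
proof -
  define f where "f z = g z * indicator (carleson_box a l) z" for z
  have [measurable]: "f \<in> borel_measurable borel" unfolding f_def by measurable
  define I where "I \<theta> = (\<integral>\<^sup>+\<rho>. indicator {0<..<1} \<rho> * indicator {1 - l/(2*pi)..} \<rho> * ennreal \<rho> * g (of_real \<rho> * cis \<theta>) \<partial>lborel)" for \<theta>
  have "(\<integral>\<^sup>+z. f z \<partial>lborel) = (\<integral>\<^sup>+\<theta>. Jpol f \<theta> * indicator {a..<a+2*pi} \<theta> \<partial>lborel)"
    by (rule polar_window) simp
  also have "\<dots> = (\<integral>\<^sup>+\<theta>. indicator {a..a+l} \<theta> * I \<theta> \<partial>lborel)"
  proof (rule nn_integral_cong_AE)
    show "AE \<theta> in lborel. Jpol f \<theta> * indicator {a..<a+2*pi} \<theta> = indicator {a..a+l} \<theta> * I \<theta>"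
    proof (rule eventually_mono[OF AE_lborel_singleton[of "a+2*pi"]])
      fix \<theta> :: real assume ne: "\<theta> \<noteq> a + 2*pi"
      show "Jpol f \<theta> * indicator {a..<a+2*pi} \<theta> = indicator {a..a+l} \<theta> * I \<theta>"
      proof (cases "a \<le> \<theta> \<and> \<theta> < a + 2*pi")
        case True
        have "Jpol f \<theta> = indicator {a..a+l} \<theta> * I \<theta>"
        proof -
          have "indicator {0<..} \<rho> * ennreal \<rho> * f (of_real \<rho> * cis \<theta>) =
                indicator {a..a+l} \<theta> * (indicator {0<..<1} \<rho> * indicator {1 - l/(2*pi)..} \<rho> * ennreal \<rho> * g (of_real \<rho> * cis \<theta>))" for \<rho>
          proof (cases "\<rho> > 0")
            case True
            show ?thesis using box_mem_polar[OF True l, of a \<theta>] \<open>a \<le> \<theta> \<and> \<theta> < a + 2*pi\<close> True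
              unfolding f_def by (auto simp: indicator_def)
          qed (simp add: indicator_def)
          then show ?thesis unfolding Jpol_def I_def
            by (simp add: nn_integral_cmult[symmetric])
        qed
        then show ?thesis using True by simp
      next
        case False
        then have "\<theta> \<notin> {a..a+l}" using ne l by auto
        then show ?thesis using False by simp
      qed
    qed
  qed
  finally show ?thesis unfolding f_def I_def .
qed

lemma dir_deriv:
  fixes f :: "complex \<Rightarrow> real"
  assumes "(f has_derivative D) (at (p + of_real t0 * v))"
  shows "((\<lambda>t. f (p + of_real t * v)) has_real_derivative D v) (at t0)"
proof -
  have lin: "linear D" using assms has_derivative_linear by blast
  have g: "((\<lambda>t::real. p + of_real t * v) has_derivative (\<lambda>t. of_real t * v)) (at t0)"
    by (auto intro!: derivative_eq_intros)
  have "((\<lambda>t. f (p + of_real t * v)) has_derivative (\<lambda>t. D (of_real t * v))) (at t0)"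
    using has_derivative_compose[OF g assms] by (simp add: o_def)
  moreover have "D (of_real t * v) = D v * t" for t
  proof -
    have "D (of_real t * v) = D (t *\<^sub>R v)" by (simp add: scaleR_conv_of_real)
    also have "\<dots> = t *\<^sub>R D v" using lin by (simp add: linear_scale)
    finally show ?thesis by simp
  qed
  ultimately show ?thesis unfolding has_field_derivative_def
    by (elim has_derivative_eq_rhs) (auto simp: fun_eq_iff mult.commute)
qed

lemma pd_from_deriv:
  fixes f :: "complex \<Rightarrow> real"
  assumes "(f has_derivative D) (at z)"
  shows "pdx f z = D 1" "pdy f z = D \<i>"
proof -
  have "((\<lambda>t. f (z + of_real t * 1)) has_real_derivative D 1) (at 0)"
    by (rule dir_deriv) (use assms in simp)
  then show "pdx f z = D 1" unfolding pdx_def by (simp add: DERIV_imp_deriv)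
  have "((\<lambda>t. f (z + of_real t * \<i>)) has_real_derivative D \<i>) (at 0)"
    by (rule dir_deriv) (use assms in simp)
  then show "pdy f z = D \<i>" unfolding pdy_def by (simp add: DERIV_imp_deriv mult.commute)
qed

lemma dir_deriv_pd:
  fixes f :: "complex \<Rightarrow> real"
  assumes "f differentiable (at (p + of_real t0 * 1))"
  shows "((\<lambda>t. f (p + of_real t * 1)) has_real_derivative pdx f (p + of_real t0 * 1)) (at t0)"
proof -
  obtain D where D: "(f has_derivative D) (at (p + of_real t0 * 1))" using assms by (auto simp: differentiable_def)
  show ?thesis using dir_deriv[OF D] pd_from_deriv[OF D] by simp
qed

lemma dir_deriv_pdy:
  fixes f :: "complex \<Rightarrow> real"
  assumes "f differentiable (at (p + of_real t0 * \<i>))"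
  shows "((\<lambda>t. f (p + of_real t * \<i>)) has_real_derivative pdy f (p + of_real t0 * \<i>)) (at t0)"
proof -
  obtain D where D: "(f has_derivative D) (at (p + of_real t0 * \<i>))" using assms by (auto simp: differentiable_def)
  show ?thesis using dir_deriv[OF D] pd_from_deriv[OF D] by simp
qed

lemma clairaut_approx:
  fixes u :: "complex \<Rightarrow> real"
  assumes S: "ball z e \<subseteq> S" and s: "0 < s" "2 * s < e"
    and du: "\<And>w. w \<in> S \<Longrightarrow> u differentiable (at w)"
    and dA: "\<And>w. w \<in> S \<Longrightarrow> pdx u differentiable (at w)"
    and dB: "\<And>w. w \<in> S \<Longrightarrow> pdy u differentiable (at w)"
  shows "\<exists>p1 p2. norm (p1 - z) < e \<and> norm (p2 - z) < e \<and> pdy (pdx u) p1 = pdx (pdy u) p2"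
proof -
  define A where "A = pdx u"
  define B where "B = pdy u"
  have inS: "z + of_real a * 1 + of_real b * \<i> \<in> S" if "0 \<le> a" "a \<le> s" "0 \<le> b" "b \<le> s" for a b
  proof -
    have "norm (of_real a * 1 + of_real b * \<i> :: complex) \<le> norm (of_real a * 1 :: complex) + norm (of_real b * \<i> :: complex)"
      by (rule norm_triangle_ineq)
    also have "\<dots> \<le> 2 * s" using that by (simp add: norm_mult)
    finally have "norm (of_real a * 1 + of_real b * \<i> :: complex) < e" using s by linarith
    then have "dist (z + (of_real a * 1 + of_real b * \<i>)) z < e" by (simp add: dist_norm)
    then have "z + (of_real a * 1 + of_real b * \<i>) \<in> ball z e" by (simp add: dist_commute)
    with S show ?thesis by (auto simp: add.assoc)
  qed
  have inS': "z + of_real b * \<i> + of_real a * 1 \<in> S" if "0 \<le> a" "a \<le> s" "0 \<le> b" "b \<le> s" for a b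
    using inS[OF that] by (simp add: algebra_simps)
  define \<Delta> where "\<Delta> = u (z + of_real s * 1 + of_real s * \<i>) - u (z + of_real s * 1) - u (z + of_real s * \<i>) + u z"
  have "\<exists>\<sigma>. 0 < \<sigma> \<and> \<sigma> < s \<and>
     (u (z + of_real s * \<i> + of_real s * 1) - u (z + of_real s * 1)) - (u (z + of_real s * \<i> + of_real 0 * 1) - u (z + of_real 0 * 1))
      = (s - 0) * (A (z + of_real s * \<i> + of_real \<sigma> * 1) - A (z + of_real \<sigma> * 1))"
  proof (rule MVT2[OF s(1)])
    fix x assume x: "0 \<le> x" "x \<le> s"
    have "z + of_real x * 1 \<in> S" using inS[OF x, of 0] s by simp
    then have d1: "((\<lambda>t. u (z + of_real t * 1)) has_real_derivative A (z + of_real x * 1)) (at x)"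
      unfolding A_def by (intro dir_deriv_pd du)
    have d2: "((\<lambda>t. u (z + of_real s * \<i> + of_real t * 1)) has_real_derivative A (z + of_real s * \<i> + of_real x * 1)) (at x)"
      unfolding A_def using inS'[OF x, of s] s by (intro dir_deriv_pd du) auto
    show "((\<lambda>t. u (z + of_real s * \<i> + of_real t * 1) - u (z + of_real t * 1)) has_real_derivative
            A (z + of_real s * \<i> + of_real x * 1) - A (z + of_real x * 1)) (at x)"
      by (intro DERIV_diff d1 d2)
  qed
  then obtain \<sigma> where \<sigma>: "0 < \<sigma>" "\<sigma> < s" and
    e1: "\<Delta> = s * (A (z + of_real s * \<i> + of_real \<sigma> * 1) - A (z + of_real \<sigma> * 1))"
    unfolding \<Delta>_def by (auto simp: algebra_simps)
  have "\<exists>\<tau>. 0 < \<tau> \<and> \<tau> < s \<and>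
      A (z + of_real \<sigma> * 1 + of_real s * \<i>) - A (z + of_real \<sigma> * 1 + of_real 0 * \<i>)
      = (s - 0) * pdy A (z + of_real \<sigma> * 1 + of_real \<tau> * \<i>)"
  proof (rule MVT2[OF s(1)])
    fix x assume x: "0 \<le> x" "x \<le> s"
    show "((\<lambda>t. A (z + of_real \<sigma> * 1 + of_real t * \<i>)) has_real_derivative pdy A (z + of_real \<sigma> * 1 + of_real x * \<i>)) (at x)"
      unfolding A_def using inS[OF _ _ x, of \<sigma>] \<sigma> by (intro dir_deriv_pdy dA) auto
  qed
  then obtain \<tau> where \<tau>: "0 < \<tau>" "\<tau> < s" and
    e2: "A (z + of_real \<sigma> * 1 + of_real s * \<i>) - A (z + of_real \<sigma> * 1) = s * pdy A (z + of_real \<sigma> * 1 + of_real \<tau> * \<i>)"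
    by auto
  have eq1: "\<Delta> = s * s * pdy A (z + of_real \<sigma> * 1 + of_real \<tau> * \<i>)"
  proof -
    have eq: "z + of_real s * \<i> + of_real \<sigma> * 1 = z + of_real \<sigma> * 1 + of_real s * \<i>" by (simp add: algebra_simps)
    show ?thesis unfolding e1 eq e2 by simp
  qed
  have "\<exists>\<tau>. 0 < \<tau> \<and> \<tau> < s \<and>
     (u (z + of_real s * 1 + of_real s * \<i>) - u (z + of_real s * \<i>)) - (u (z + of_real s * 1 + of_real 0 * \<i>) - u (z + of_real 0 * \<i>))
      = (s - 0) * (B (z + of_real s * 1 + of_real \<tau> * \<i>) - B (z + of_real \<tau> * \<i>))"
  proof (rule MVT2[OF s(1)])
    fix x assume x: "0 \<le> x" "x \<le> s"
    have "z + of_real x * \<i> \<in> S" using inS[OF _ _ x, of 0] s by simp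
    then have d1: "((\<lambda>t. u (z + of_real t * \<i>)) has_real_derivative B (z + of_real x * \<i>)) (at x)"
      unfolding B_def using dir_deriv_pdy[of u z x] du by simp
    have d2: "((\<lambda>t. u (z + of_real s * 1 + of_real t * \<i>)) has_real_derivative B (z + of_real s * 1 + of_real x * \<i>)) (at x)"
      unfolding B_def using inS[OF _ _ x, of s] s by (intro dir_deriv_pdy du) auto
    show "((\<lambda>t. u (z + of_real s * 1 + of_real t * \<i>) - u (z + of_real t * \<i>)) has_real_derivative
            B (z + of_real s * 1 + of_real x * \<i>) - B (z + of_real x * \<i>)) (at x)"
      by (intro DERIV_diff d1 d2)
  qed
  then obtain \<tau>' where \<tau>': "0 < \<tau>'" "\<tau>' < s" and
    e3: "\<Delta> = s * (B (z + of_real s * 1 + of_real \<tau>' * \<i>) - B (z + of_real \<tau>' * \<i>))"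
    unfolding \<Delta>_def by (auto simp: algebra_simps)
  have "\<exists>\<sigma>. 0 < \<sigma> \<and> \<sigma> < s \<and>
      B (z + of_real \<tau>' * \<i> + of_real s * 1) - B (z + of_real \<tau>' * \<i> + of_real 0 * 1)
      = (s - 0) * pdx B (z + of_real \<tau>' * \<i> + of_real \<sigma> * 1)"
  proof (rule MVT2[OF s(1)])
    fix x assume x: "0 \<le> x" "x \<le> s"
    show "((\<lambda>t. B (z + of_real \<tau>' * \<i> + of_real t * 1)) has_real_derivative pdx B (z + of_real \<tau>' * \<i> + of_real x * 1)) (at x)"
      unfolding B_def using inS'[OF x, of \<tau>'] \<tau>' by (intro dir_deriv_pd dB) auto
  qed
  then obtain \<sigma>' where \<sigma>': "0 < \<sigma>'" "\<sigma>' < s" and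
    e4: "B (z + of_real \<tau>' * \<i> + of_real s * 1) - B (z + of_real \<tau>' * \<i>) = s * pdx B (z + of_real \<tau>' * \<i> + of_real \<sigma>' * 1)"
    by auto
  have eq2: "\<Delta> = s * s * pdx B (z + of_real \<tau>' * \<i> + of_real \<sigma>' * 1)"
  proof -
    have eq: "z + of_real s * 1 + of_real \<tau>' * \<i> = z + of_real \<tau>' * \<i> + of_real s * 1" by (simp add: algebra_simps)
    show ?thesis unfolding e3 eq e4 by simp
  qed
  have "pdy A (z + of_real \<sigma> * 1 + of_real \<tau> * \<i>) = pdx B (z + of_real \<tau>' * \<i> + of_real \<sigma>' * 1)"
    using eq1 eq2 s by simp
  moreover have "norm (z + of_real \<sigma> * 1 + of_real \<tau> * \<i> - z) < e"
    using inS[of \<sigma> \<tau>] \<sigma> \<tau> s norm_triangle_ineq[of "of_real \<sigma> :: complex" "of_real \<tau> * \<i>"]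
    by (simp add: norm_mult)
  moreover have "norm (z + of_real \<tau>' * \<i> + of_real \<sigma>' * 1 - z) < e"
    using \<sigma>' \<tau>' s norm_triangle_ineq[of "of_real \<tau>' * \<i> :: complex" "of_real \<sigma>'"]
    by (simp add: norm_mult)
  ultimately show ?thesis unfolding A_def B_def by blast
qed

lemma abs_contra: "\<bar>x - a\<bar> < \<bar>a - b\<bar> / 2 \<Longrightarrow> \<bar>x - b\<bar> < \<bar>a - b\<bar> / 2 \<Longrightarrow> False" for x a b :: real
  by (auto simp: abs_if split: if_splits)

lemma clairaut:
  fixes u :: "complex \<Rightarrow> real"
  assumes S: "open S" "z \<in> S"
    and du: "\<And>w. w \<in> S \<Longrightarrow> u differentiable (at w)"
    and dA: "\<And>w. w \<in> S \<Longrightarrow> pdx u differentiable (at w)"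
    and dB: "\<And>w. w \<in> S \<Longrightarrow> pdy u differentiable (at w)"
    and c1: "continuous_on S (pdy (pdx u))" and c2: "continuous_on S (pdx (pdy u))"
  shows "pdy (pdx u) z = pdx (pdy u) z"
proof (rule ccontr)
  assume ne: "pdy (pdx u) z \<noteq> pdx (pdy u) z"
  define \<epsilon> where "\<epsilon> = \<bar>pdy (pdx u) z - pdx (pdy u) z\<bar> / 2"
  have \<epsilon>: "\<epsilon> > 0" using ne unfolding \<epsilon>_def by simp
  obtain e0 where e0: "e0 > 0" "ball z e0 \<subseteq> S" using S by (auto simp: open_contains_ball)
  have "isCont (pdy (pdx u)) z" using c1 S continuous_on_eq_continuous_at by blast
  then obtain d1 where d1: "d1 > 0" "\<And>w. dist w z < d1 \<Longrightarrow> dist (pdy (pdx u) w) (pdy (pdx u) z) < \<epsilon>"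
    using \<epsilon> unfolding continuous_at_eps_delta by blast
  have "isCont (pdx (pdy u)) z" using c2 S continuous_on_eq_continuous_at by blast
  then obtain d2 where d2: "d2 > 0" "\<And>w. dist w z < d2 \<Longrightarrow> dist (pdx (pdy u) w) (pdx (pdy u) z) < \<epsilon>"
    using \<epsilon> unfolding continuous_at_eps_delta by blast
  define e where "e = min e0 (min d1 d2)"
  have e: "e > 0" "ball z e \<subseteq> S" using e0 d1 d2 unfolding e_def by auto
  obtain p1 p2 where p: "norm (p1 - z) < e" "norm (p2 - z) < e" "pdy (pdx u) p1 = pdx (pdy u) p2"
  proof -
    have "\<exists>p1 p2. norm (p1 - z) < e \<and> norm (p2 - z) < e \<and> pdy (pdx u) p1 = pdx (pdy u) p2"
      by (rule clairaut_approx[OF e(2), where s="e/4"]) (use e du dA dB in auto)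
    then show ?thesis using that by blast
  qed
  have "dist (pdy (pdx u) p1) (pdy (pdx u) z) < \<epsilon>" using p d1 unfolding e_def by (intro d1) (simp add: dist_norm)
  moreover have "dist (pdx (pdy u) p2) (pdx (pdy u) z) < \<epsilon>" using p d2 unfolding e_def by (intro d2) (simp add: dist_norm)
  ultimately show False using p(3) abs_contra unfolding \<epsilon>_def dist_real_def by metis
qed

lemmas has_derivative_of_real' = bounded_linear.has_derivative[OF bounded_linear_of_real]

lemma linear_decomp:
  fixes D :: "complex \<Rightarrow> real"
  assumes "linear D"
  shows "D h = Re h * D 1 + Im h * D \<i>"
proof -
  have "h = Re h *\<^sub>R 1 + Im h *\<^sub>R \<i>" by (simp add: complex_eq_iff)
  then have "D h = D (Re h *\<^sub>R 1 + Im h *\<^sub>R \<i>)" by simp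
  also have "\<dots> = Re h * D 1 + Im h * D \<i>"
    using assms by (simp add: linear_add linear_scale)
  finally show ?thesis .
qed

lemma harmonic_re_holo:
  fixes u :: "complex \<Rightarrow> real"
  assumes harm: "harmonic_on (ball 0 1) u"
  obtains F where "F holomorphic_on ball 0 1" "\<And>z. z \<in> ball 0 1 \<Longrightarrow> Re (F z) = u z"
proof -
  define S :: "complex set" where "S = ball 0 1"
  have S: "open S" "convex S" unfolding S_def by auto
  have du: "\<And>w. w \<in> S \<Longrightarrow> u differentiable (at w)"
    and dA: "\<And>w. w \<in> S \<Longrightarrow> pdx u differentiable (at w)"
    and dB: "\<And>w. w \<in> S \<Longrightarrow> pdy u differentiable (at w)"
    and c1: "continuous_on S (pdy (pdx u))" and c2: "continuous_on S (pdx (pdy u))"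
    and lap: "\<And>w. w \<in> S \<Longrightarrow> pdx (pdx u) w + pdy (pdy u) w = 0"
    using harm unfolding harmonic_on_def S_def by auto
  define Du where "Du w = frechet_derivative u (at w)" for w
  define DA where "DA w = frechet_derivative (pdx u) (at w)" for w
  define DB where "DB w = frechet_derivative (pdy u) (at w)" for w
  have hDu: "(u has_derivative Du w) (at w)" if "w \<in> S" for w
    using du[OF that] unfolding Du_def by (simp add: frechet_derivative_works)
  have hDA: "(pdx u has_derivative DA w) (at w)" if "w \<in> S" for w
    using dA[OF that] unfolding DA_def by (simp add: frechet_derivative_works)
  have hDB: "(pdy u has_derivative DB w) (at w)" if "w \<in> S" for w
    using dB[OF that] unfolding DB_def by (simp add: frechet_derivative_works)
  define g where "g w = complex_of_real (pdx u w) - \<i> * complex_of_real (pdy u w)" for w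
  have gder: "(g has_field_derivative (complex_of_real (DA w 1) - \<i> * complex_of_real (DB w 1))) (at w)"
    if w: "w \<in> S" for w
  proof -
    have lA: "linear (DA w)" using hDA[OF w] has_derivative_linear by blast
    have lB: "linear (DB w)" using hDB[OF w] has_derivative_linear by blast
    have cl: "DA w \<i> = DB w 1"
      using clairaut[OF S(1) w du dA dB c1 c2] pd_from_deriv[OF hDA[OF w]] pd_from_deriv[OF hDB[OF w]] by simp
    have lp: "DA w 1 + DB w \<i> = 0"
      using lap[OF w] pd_from_deriv[OF hDA[OF w]] pd_from_deriv[OF hDB[OF w]] by simp
    then have lp': "DB w \<i> = - DA w 1" by linarith
    have "(g has_derivative (\<lambda>h. complex_of_real (DA w h) - \<i> * complex_of_real (DB w h))) (at w)"
      unfolding g_def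
      by (intro has_derivative_diff has_derivative_mult_right has_derivative_of_real'[OF hDA[OF w]]
                 has_derivative_of_real'[OF hDB[OF w]])
    moreover have "(\<lambda>h. complex_of_real (DA w h) - \<i> * complex_of_real (DB w h)) =
                   (*) (complex_of_real (DA w 1) - \<i> * complex_of_real (DB w 1))"
    proof
      fix h
      show "complex_of_real (DA w h) - \<i> * complex_of_real (DB w h) =
            (complex_of_real (DA w 1) - \<i> * complex_of_real (DB w 1)) * h"
        using linear_decomp[OF lA, of h] linear_decomp[OF lB, of h] cl lp'
        by (simp add: complex_eq_iff algebra_simps)
    qed
    ultimately show ?thesis unfolding has_field_derivative_def by simp
  qed
  have gholo: "g holomorphic_on S"
    using gder by (auto simp: holomorphic_on_def field_differentiable_def intro: has_field_derivative_at_within)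
  obtain G where G: "\<And>x. x \<in> S \<Longrightarrow> (G has_field_derivative g x) (at x within S)"
    using holomorphic_convex_primitive'[OF S(2) S(1) gholo] by blast
  have G': "(G has_field_derivative g x) (at x)" if "x \<in> S" for x
    using G[OF that] at_within_open[OF that S(1)] by simp
  have "\<exists>c. \<forall>x\<in>S. Re (G x) - u x = c"
  proof (rule has_derivative_zero_constant[OF S(2)])
    fix x assume x: "x \<in> S"
    have "((\<lambda>x. Re (G x) - u x) has_derivative (\<lambda>h. Re (g x * h) - Du x h)) (at x)"
      using G'[OF x] hDu[OF x] unfolding has_field_derivative_def
      by (intro has_derivative_diff has_derivative_Re) auto
    moreover have "(\<lambda>h. Re (g x * h) - Du x h) = (\<lambda>h. 0)"
    proof
      fix h
      have lu: "linear (Du x)" using hDu[OF x] has_derivative_linear by blast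
      show "Re (g x * h) - Du x h = 0"
        using linear_decomp[OF lu, of h] pd_from_deriv[OF hDu[OF x]] unfolding g_def
        by (simp add: algebra_simps)
    qed
    ultimately show "((\<lambda>x. Re (G x) - u x) has_derivative (\<lambda>h. 0)) (at x within S)"
      by (auto intro: has_derivative_at_withinI)
  qed
  then obtain c where c: "\<And>x. x \<in> S \<Longrightarrow> Re (G x) - u x = c" by blast
  have Gh: "G holomorphic_on S" using G by (auto simp: holomorphic_on_def field_differentiable_def)
  then have "(\<lambda>z. G z - of_real c) holomorphic_on S" by (intro holomorphic_intros)
  moreover have "\<And>z. z \<in> S \<Longrightarrow> Re (G z - of_real c) = u z" using c by force
  ultimately show ?thesis using that unfolding S_def by blast
qed

lemma moebius_den_nz:
  assumes "norm w < 1" "norm z < 1"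
  shows "1 - cnj w * z \<noteq> 0"
proof
  assume "1 - cnj w * z = 0"
  then have "norm (cnj w * z) = 1" by (metis norm_one right_minus_eq)
  moreover have "norm w * norm z < 1 * 1" using assms by (intro mult_strict_mono') auto
  then have "norm (cnj w * z) < 1" by (simp add: norm_mult)
  ultimately show False by simp
qed

lemma moebius_identity:
  assumes w1: "norm w < 1" and z1: "norm z < 1"
  shows "1 - norm (Moebius_function 0 w z) ^ 2 = ((1 - norm w ^ 2) / (norm (1 - cnj w * z) ^ 2)) * (1 - norm z ^ 2)"
proof -
  have "1 - cnj w * z \<noteq> 0" by (rule moebius_den_nz[OF assms])
  then have VV: "1 - w * cnj z \<noteq> 0"
    by (metis complex_cnj_cnj complex_cnj_mult complex_cnj_one right_minus_eq)
  then show ?thesis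
    apply (cases w)
    apply (cases z)
    apply (simp add: Moebius_function_def divide_simps norm_divide norm_mult)
    apply (simp add: complex_norm complex_diff complex_mult one_complex.code complex_cnj)
    apply (auto simp: algebra_simps power2_eq_square)
    done
qed

lemma norm_sq_diff_lemma:
  fixes x q :: complex
  shows "(norm (x + cnj q))\<^sup>2 - (norm (x - q))\<^sup>2 = 4 * Re x * Re q"
  unfolding cmod_power2 by (simp add: power2_eq_square algebra_simps)

lemma ratio_bounds:
  fixes t r d :: real
  assumes "0 \<le> t" "t \<le> r" "r < 1" "1 - t \<le> d" "d \<le> 1 + t" "0 < d"
  shows "(1 - r\<^sup>2) / 4 \<le> (1 - t\<^sup>2) / d\<^sup>2" and "(1 - t\<^sup>2) / d\<^sup>2 \<le> (1 + r) / (1 - r)"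
proof -
  have t1: "t < 1" using assms by linarith
  have nn: "0 \<le> 1 - t\<^sup>2" using assms t1 by (simp add: abs_le_iff power2_le_iff_abs_le power_le_one)
  have d2: "d\<^sup>2 \<le> 4"
  proof -
    have "d \<le> 2" using assms t1 by linarith
    then have "d\<^sup>2 \<le> 2\<^sup>2" using assms by (intro power_mono) auto
    then show ?thesis by simp
  qed
  have "(1 - r\<^sup>2) / 4 \<le> (1 - t\<^sup>2) / 4"
    using assms by (intro divide_right_mono) (auto intro: power_mono)
  also have "\<dots> \<le> (1 - t\<^sup>2) / d\<^sup>2"
    using nn d2 assms by (intro divide_left_mono) auto
  finally show "(1 - r\<^sup>2) / 4 \<le> (1 - t\<^sup>2) / d\<^sup>2" .
  have p: "0 < 1 - t" using t1 by simp
  have "(1 - t)\<^sup>2 \<le> d\<^sup>2" using assms p by (intro power_mono) auto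
  then have "(1 - t\<^sup>2) / d\<^sup>2 \<le> (1 - t\<^sup>2) / (1 - t)\<^sup>2"
    using nn p assms(6) by (intro divide_left_mono) auto
  also have "\<dots> = (1 + t) / (1 - t)"
  proof -
    have "1 - t\<^sup>2 = (1 + t) * (1 - t)" by (simp add: power2_eq_square algebra_simps)
    then show ?thesis using p by (simp add: power2_eq_square)
  qed
  also have "\<dots> \<le> (1 + r) / (1 - r)"
    using assms p by (simp add: field_simps)
  finally show "(1 - t\<^sup>2) / d\<^sup>2 \<le> (1 + r) / (1 - r)" .
qed

lemma key_alg:
  fixes N E x r :: real
  assumes "N > 0" "r > 0" "N\<^sup>2 - E\<^sup>2 = 4 * x * r"
  shows "(1 - (E / N)\<^sup>2) / (2 * r / N)\<^sup>2 = x / r"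
proof -
  have "1 - (E / N)\<^sup>2 = (N\<^sup>2 - E\<^sup>2) / N\<^sup>2" using assms(1) by (simp add: power_divide diff_divide_distrib)
  also have "\<dots> = 4 * x * r / N\<^sup>2" using assms by simp
  finally have h1: "1 - (E / N)\<^sup>2 = 4 * x * r / N\<^sup>2" .
  have h2: "(2 * r / N)\<^sup>2 = 4 * r\<^sup>2 / N\<^sup>2" by (simp add: power2_eq_square)
  show ?thesis unfolding h1 h2 using assms(1,2) by (simp add: field_simps power2_eq_square)
qed

lemma harnack:
  fixes F :: "complex \<Rightarrow> complex"
  assumes holo: "F holomorphic_on ball 0 1" and pos: "\<And>z. z \<in> ball 0 1 \<Longrightarrow> Re (F z) > 0"
    and a: "norm a < 1" and z: "norm z < 1"
  shows "Re (F a) * (1 - (norm (Moebius_function 0 a z))\<^sup>2) / 4 \<le> Re (F z)"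
    and "Re (F z) \<le> Re (F a) * (1 + norm (Moebius_function 0 a z)) / (1 - norm (Moebius_function 0 a z))"
proof -
  define p where "p = F a"
  have rp: "Re p > 0" using pos a unfolding p_def by simp
  define H where "H w = (F w - p) / (F w + cnj p)" for w
  have den: "F w + cnj p \<noteq> 0" if "norm w < 1" for w
  proof
    assume "F w + cnj p = 0"
    then have "Re (F w + cnj p) = 0" by simp
    moreover have "Re (F w) > 0" using pos that by simp
    ultimately show False using rp by simp
  qed
  have Hlt: "norm (H w) < 1" if w: "norm w < 1" for w
  proof -
    have "(norm (F w + cnj p))\<^sup>2 - (norm (F w - p))\<^sup>2 > 0"
      using norm_sq_diff_lemma[of "F w" p] pos[of w] w rp by simp
    then have "norm (F w - p) < norm (F w + cnj p)"
      by (smt (verit) norm_ge_zero power_mono)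
    then show ?thesis unfolding H_def using den[OF w] by (simp add: norm_divide divide_less_eq)
  qed
  define K where "K w = H (Moebius_function 0 (-a) w)" for w
  have Mh: "Moebius_function 0 (-a) holomorphic_on ball 0 1" using a by (intro Moebius_function_holomorphic) simp
  have Mb: "norm (Moebius_function 0 (-a) w) < 1" if "norm w < 1" for w
    using a that by (intro Moebius_function_norm_lt_1) auto
  have Hh: "H holomorphic_on ball 0 1"
    unfolding H_def using den holo by (intro holomorphic_intros) auto
  have Kh: "K holomorphic_on ball 0 1"
    unfolding K_def
    by (rule holomorphic_on_compose_gen[OF Mh Hh, unfolded o_def]) (use Mb in auto)
  have K0: "K 0 = 0" unfolding K_def H_def p_def by (simp add: Moebius_function_of_zero)
  define \<xi> where "\<xi> = Moebius_function 0 a z"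
  have \<xi>1: "norm \<xi> < 1" unfolding \<xi>_def using a z by (intro Moebius_function_norm_lt_1)
  have K\<xi>: "K \<xi> = H z" unfolding K_def \<xi>_def using a z by (subst Moebius_function_compose) auto
  have Hr: "norm (H z) \<le> norm \<xi>"
    using Schwarz_Lemma(1)[OF Kh K0 _ \<xi>1] Hlt Mb K\<xi> unfolding K_def by auto
  define X where "X = F z"
  define D where "D = X + cnj p"
  have D0: "D \<noteq> 0" unfolding D_def X_def using den z by simp
  have rX: "Re X > 0" unfolding X_def using pos z by simp
  have HX: "H z = (X - p) / D" unfolding H_def X_def D_def by simp
  have pp: "p + cnj p = 2 * of_real (Re p)" by (simp add: complex_eq_iff)
  have "1 - (X - p) / D = (p + cnj p) / D"
    using D0 unfolding D_def by (simp add: field_simps)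
  then have oneH: "1 - H z = (2 * of_real (Re p)) / D"
    unfolding HX pp .
  have n1H: "norm (1 - H z) = 2 * Re p / norm D" using rp unfolding oneH by (simp add: norm_divide norm_mult)
  have nH: "norm (H z) = norm (X - p) / norm D" unfolding HX by (simp add: norm_divide)
  have key: "(1 - (norm (H z))\<^sup>2) / (norm (1 - H z))\<^sup>2 = Re X / Re p"
  proof -
    have nD: "norm D > 0" using D0 by simp
    have "(norm D)\<^sup>2 - (norm (X - p))\<^sup>2 = 4 * Re X * Re p"
      unfolding D_def by (rule norm_sq_diff_lemma)
    then show ?thesis unfolding nH n1H by (rule key_alg[OF nD rp])
  qed
  have d0: "norm (1 - H z) > 0" using n1H rp D0 by simp
  have dl: "1 - norm (H z) \<le> norm (1 - H z)"
    using norm_triangle_ineq2[of 1 "H z"] by simp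
  have du: "norm (1 - H z) \<le> 1 + norm (H z)"
    using norm_triangle_ineq4[of 1 "H z"] by simp
  have rb: "(1 - (norm \<xi>)\<^sup>2) / 4 \<le> Re X / Re p" "Re X / Re p \<le> (1 + norm \<xi>) / (1 - norm \<xi>)"
    using ratio_bounds[OF norm_ge_zero Hr \<xi>1 dl du d0] unfolding key by auto
  show "Re (F a) * (1 - (norm (Moebius_function 0 a z))\<^sup>2) / 4 \<le> Re (F z)"
    using rb(1) rp unfolding \<xi>_def X_def p_def by (simp add: field_simps)
  show "Re (F z) \<le> Re (F a) * (1 + norm (Moebius_function 0 a z)) / (1 - norm (Moebius_function 0 a z))"
    using rb(2) rp \<xi>1 unfolding \<xi>_def X_def p_def by (simp add: field_simps)
qed

lemma norm_of_real_m1[simp]: "norm (complex_of_real x - 1) = \<bar>x - 1\<bar>"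
  by (metis norm_of_real of_real_1 of_real_diff)

lemma norm_one_m_of_real[simp]: "norm (1 - complex_of_real x) = \<bar>1 - x\<bar>"
  by (metis norm_of_real of_real_1 of_real_diff)

lemma cis_diff_le: "norm (cis x - cis y) \<le> \<bar>x - y\<bar>"
proof -
  have "cis x - cis y = cis y * (cis (x - y) - 1)" by (simp add: algebra_simps cis_mult)
  then have "norm (cis x - cis y) = norm (cis (x - y) - 1)" by (simp add: norm_mult)
  also have "\<dots> = 2 * \<bar>sin ((x - y) / 2)\<bar>" using dist_exp_i_1[of "x - y"] by (simp add: cis_conv_exp)
  also have "\<dots> \<le> 2 * \<bar>(x - y) / 2\<bar>" using abs_sin_x_le_abs_x[of "(x - y) / 2"] by linarith
  finally show ?thesis by simp
qed

lemma one_minus_rcis_le: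
  assumes "0 \<le> r" "r \<le> 1"
  shows "norm (1 - of_real r * cis s) \<le> (1 - r) + \<bar>s\<bar>"
proof -
  have "1 - of_real r * cis s = of_real (1 - r) + of_real r * (1 - cis s)" by (simp add: algebra_simps)
  then have "norm (1 - of_real r * cis s) \<le> norm (of_real (1 - r) :: complex) + norm (of_real r * (1 - cis s))"
    by (metis norm_triangle_ineq)
  also have "\<dots> = (1 - r) + r * norm (1 - cis s)" using assms by (simp add: norm_mult)
  also have "norm (1 - cis s) \<le> \<bar>s\<bar>" using cis_diff_le[of 0 s] by (simp add: norm_minus_commute)
  then have "r * norm (1 - cis s) \<le> 1 * \<bar>s\<bar>" using assms by (intro mult_mono) auto
  finally show ?thesis by simp
qed

locale boxdata =
  fixes \<alpha> l :: real
  assumes l: "0 < l" "l \<le> 2*pi"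
begin

definition "h = l / (2*pi)"
definition "m = \<alpha> + l / 2"
definition "a = of_real (1 - h) * cis m"

lemma h: "0 < h" "h \<le> 1" using l unfolding h_def by (auto simp: field_simps)
lemma l_eq: "l = 2*pi*h" unfolding h_def by simp
lemma norm_a: "norm a = 1 - h" unfolding a_def using h by (simp add: norm_mult)
lemma a_in: "norm a < 1" using norm_a h by simp
lemma one_minus_a2: "h \<le> 1 - (norm a)\<^sup>2"
  unfolding norm_a using h by (simp add: power2_eq_square algebra_simps)

lemma theta_mid: "\<theta> \<in> {\<alpha>..\<alpha>+l} \<Longrightarrow> \<bar>\<theta> - m\<bar> \<le> pi * h"
  unfolding m_def using l_eq by auto

lemma geo_den:
  assumes \<theta>: "\<theta> \<in> {\<alpha>..\<alpha>+l}" and \<rho>: "1 - h \<le> \<rho>" "\<rho> \<le> 1"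
  shows "norm (1 - cnj a * (of_real \<rho> * cis \<theta>)) \<le> 6 * h"
proof -
  have cc: "cis (-m) * cis \<theta> = cis (\<theta> - m)" by (simp add: cis_mult)
  have "cnj a * (of_real \<rho> * cis \<theta>) = of_real ((1 - h) * \<rho>) * (cis (-m) * cis \<theta>)"
    unfolding a_def by (simp add: cis_cnj)
  then have "cnj a * (of_real \<rho> * cis \<theta>) = of_real ((1 - h) * \<rho>) * cis (\<theta> - m)"
    unfolding cc .
  note E = this
  have r0: "0 \<le> (1 - h) * \<rho>" "(1 - h) * \<rho> \<le> 1" using h \<rho> by (auto simp: mult_le_one)
  have "norm (1 - cnj a * (of_real \<rho> * cis \<theta>)) = norm (1 - of_real ((1 - h) * \<rho>) * cis (\<theta> - m))"
    by (simp only: E)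
  also have "\<dots> \<le> (1 - (1 - h) * \<rho>) + \<bar>\<theta> - m\<bar>"
    by (rule one_minus_rcis_le[OF r0])
  also have "1 - (1 - h) * \<rho> \<le> 2 * h"
  proof -
    have "(1 - h) * (1 - h) \<le> (1 - h) * \<rho>" using h \<rho> by (intro mult_left_mono) auto
    then have "1 - (1 - h) * \<rho> \<le> 2 * h - h * h" by (simp add: algebra_simps)
    moreover have "0 \<le> h * h" by simp
    ultimately show ?thesis by linarith
  qed
  also have "\<bar>\<theta> - m\<bar> \<le> pi * h" by (rule theta_mid[OF \<theta>])
  also have "2 * h + pi * h \<le> 6 * h" using pi_less_4 h by (simp add: algebra_simps)
  finally show ?thesis by simp
qed

lemma geo_poisson:
  assumes \<theta>: "\<theta> \<in> {\<alpha>..\<alpha>+l}"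
  shows "1 \<le> 25 * h * Pk a \<theta>"
proof -
  have t1: "norm (cis \<theta> - a) \<le> norm (cis \<theta> - cis m) + norm (cis m - a)"
    using norm_triangle_ineq[of "cis \<theta> - cis m" "cis m - a"] by simp
  have t2: "norm (cis \<theta> - cis m) \<le> pi * h" using cis_diff_le[of \<theta> m] theta_mid[OF \<theta>] by simp
  have t3: "norm (cis m - a) = h"
  proof -
    have "cis m - a = of_real h * cis m" unfolding a_def by (simp add: algebra_simps)
    then show ?thesis using h by (simp add: norm_mult)
  qed
  have d0': "norm (cis \<theta> - a) \<le> pi * h + h" using t1 t2 t3 by linarith
  have "pi * h \<le> 4 * h" using pi_less_4 h by (intro mult_right_mono) auto
  then have d: "norm (cis \<theta> - a) \<le> 5 * h" using d0' by linarith
  have d0: "norm (cis \<theta> - a) > 0" using a_in by (auto simp: norm_minus_commute) (metis norm_cis order_less_irrefl)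
  have "(norm (cis \<theta> - a))\<^sup>2 \<le> (5 * h)\<^sup>2" using d d0 by (intro power_mono) auto
  then have "(norm (cis \<theta> - a))\<^sup>2 \<le> 25 * h * h" by (simp add: power2_eq_square)
  also have "25 * h * h \<le> 25 * h * (1 - (norm a)\<^sup>2)" using one_minus_a2 h by (intro mult_left_mono) auto
  finally show ?thesis unfolding Pk_def using d0 by (simp add: field_simps)
qed

lemma geo_moeb_half:
  assumes \<rho>: "1 - h \<le> \<rho>" "\<rho> < 1"
  shows "norm (Moebius_function 0 a (of_real \<rho> * a)) \<le> 1/2"
proof -
  have aa: "cnj a * a = of_real ((1 - h)\<^sup>2)"
    using norm_a complex_norm_square[of a] by (simp add: mult.commute)
  have den: "1 - cnj a * (of_real \<rho> * a) = of_real (1 - \<rho> * (1 - h)\<^sup>2)"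
    using aa by (simp add: algebra_simps)
  have hp: "0 < 1 - \<rho> * (1 - h)\<^sup>2"
  proof -
    have "\<rho> * (1 - h)\<^sup>2 < 1 * 1" using \<rho> h by (intro mult_strict_mono') (auto simp: power_le_one power_less_one_iff)
    then show ?thesis by simp
  qed
  have "Moebius_function 0 a (of_real \<rho> * a) = (of_real \<rho> * a - a) / of_real (1 - \<rho> * (1 - h)\<^sup>2)"
    unfolding Moebius_function_simple den ..
  then have "norm (Moebius_function 0 a (of_real \<rho> * a)) = (1 - \<rho>) * (1 - h) / (1 - \<rho> * (1 - h)\<^sup>2)"
  proof -
    have "of_real \<rho> * a - a = of_real (\<rho> - 1) * a" by (simp add: algebra_simps)
    then have "norm (of_real \<rho> * a - a) = (1 - \<rho>) * (1 - h)" using \<rho> norm_a by (simp add: norm_mult)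
    moreover assume "Moebius_function 0 a (of_real \<rho> * a) = (of_real \<rho> * a - a) / of_real (1 - \<rho> * (1 - h)\<^sup>2)"
    then have "norm (Moebius_function 0 a (of_real \<rho> * a)) = norm (of_real \<rho> * a - a) / \<bar>1 - \<rho> * (1 - h)\<^sup>2\<bar>"
      by (simp only: norm_divide norm_of_real)
    ultimately show ?thesis using hp by simp
  qed
  also have "\<dots> \<le> 1/2"
  proof -
    have key: "2 * ((1 - \<rho>) * (1 - h)) \<le> 1 - \<rho> * (1 - h)\<^sup>2"
    proof -
      have "(2*h - 1) + \<rho> * ((1 - h) * (1 + h)) - (1 - \<rho> * (1 - h)\<^sup>2 - 2 * ((1 - \<rho>) * (1 - h))) = 0"
        by (simp add: power2_eq_square algebra_simps)
      moreover have "(1 - h) * ((1 - h) * (1 + h)) \<le> \<rho> * ((1 - h) * (1 + h))"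
        using \<rho> h by (intro mult_right_mono) auto
      moreover have "(2*h - 1) + (1 - h) * ((1 - h) * (1 + h)) = h * (1 - h + h * h)"
        by (simp add: algebra_simps)
      moreover have "0 \<le> h * (1 - h + h * h)" using h by (intro mult_nonneg_nonneg) (auto intro: add_nonneg_nonneg)
      ultimately show ?thesis by linarith
    qed
    then show ?thesis using hp by (simp add: field_simps)
  qed
  finally show ?thesis .
qed

end

lemma nn_integral_one_minus_powr:
  fixes h s :: real
  assumes h: "0 < h" and s: "0 < s" "s < 1"
  shows "(\<integral>\<^sup>+\<rho>. ennreal ((1 - \<rho>) powr (-s)) * indicator {1-h..<1} \<rho> \<partial>lborel) = ennreal (h powr (1 - s) / (1 - s))"
proof -
  have hi: "((\<lambda>x. x powr (-s)) has_integral (h powr (-s + 1) / (-s + 1))) {0..h}"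
    using s h by (intro has_integral_powr_from_0) auto
  have "(\<integral>\<^sup>+x. ennreal (x powr (-s)) * indicator {0..h} x \<partial>lborel) = ennreal (h powr (-s + 1) / (-s + 1))"
    by (rule nn_integral_has_integral_lebesgue'[OF _ hi]) simp
  then have n1: "(\<integral>\<^sup>+x. ennreal (x powr (-s)) * indicator {0..h} x \<partial>lborel) = ennreal (h powr (1 - s) / (1 - s))"
    by (simp add: add.commute)
  have "(\<integral>\<^sup>+\<rho>. ennreal ((1 - \<rho>) powr (-s)) * indicator {1-h..<1} \<rho> \<partial>lborel) =
        ennreal \<bar>-1\<bar> * (\<integral>\<^sup>+x. ennreal ((1 - (1 + -1 * x)) powr (-s)) * indicator {1-h..<1} (1 + -1 * x) \<partial>lborel)"
    by (rule nn_integral_real_affine) auto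
  also have "\<dots> = (\<integral>\<^sup>+x. ennreal (x powr (-s)) * indicator {0..h} x \<partial>lborel)"
    by (auto intro!: nn_integral_cong_AE eventually_mono[OF AE_lborel_singleton[of 0]] simp: indicator_def)
  finally show ?thesis using n1 by simp
qed

lemma nn_integral_id_interval:
  fixes h :: real
  assumes h: "0 < h" "h \<le> 1"
  shows "(\<integral>\<^sup>+\<rho>. ennreal \<rho> * indicator {1-h..1} \<rho> \<partial>lborel) = ennreal ((1 - (1 - h)\<^sup>2) / 2)"
proof -
  have "((\<lambda>x. x) has_integral ((\<lambda>x. x\<^sup>2 / 2) 1 - (\<lambda>x. x\<^sup>2 / 2) (1 - h))) {1-h..1}"
    using h by (intro fundamental_theorem_of_calculus) (auto intro!: derivative_eq_intros simp: has_real_derivative_iff_has_vector_derivative[symmetric])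
  then have hi: "((\<lambda>x. x) has_integral ((1 - (1 - h)\<^sup>2) / 2)) {1-h..1}" by (simp add: diff_divide_distrib)
  show ?thesis by (rule nn_integral_has_integral_lebesgue'[OF _ hi]) (use h in auto)
qed

locale boxF = boxdata +
  fixes F :: "complex \<Rightarrow> complex"
  assumes holo: "F holomorphic_on ball 0 1" and pos: "\<And>z. z \<in> ball 0 1 \<Longrightarrow> Re (F z) > 0"
begin

definition "U z = Re (F z)"

lemma Ua_pos: "U a > 0" unfolding U_def using pos a_in by simp

lemma U_cont: "continuous_on (ball 0 1) U"
  unfolding U_def using holomorphic_on_imp_continuous_on[OF holo] by (intro continuous_intros)

lemma lowerU:
  assumes \<theta>: "\<theta> \<in> {\<alpha>..\<alpha>+l}" and \<rho>: "1 - h \<le> \<rho>" "\<rho> < 1" "0 < \<rho>"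
  shows "U a * (1 - \<rho>) / (144 * h) \<le> U (of_real \<rho> * cis \<theta>)"
proof -
  define z where "z = of_real \<rho> * cis \<theta>"
  have nz: "norm z = \<rho>" unfolding z_def using \<rho> by (simp add: norm_mult)
  have z1: "norm z < 1" using nz \<rho> by simp
  have H: "U a * (1 - (norm (Moebius_function 0 a z))\<^sup>2) / 4 \<le> U z"
    unfolding U_def by (rule harnack(1)[OF holo pos a_in z1]) simp
  have id: "1 - (norm (Moebius_function 0 a z))\<^sup>2 = ((1 - (norm a)\<^sup>2) / (norm (1 - cnj a * z))\<^sup>2) * (1 - (norm z)\<^sup>2)"
    by (rule moebius_identity[OF a_in z1])
  have D: "norm (1 - cnj a * z) \<le> 6 * h" unfolding z_def by (rule geo_den[OF \<theta>]) (use \<rho> in auto)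
  have D0: "norm (1 - cnj a * z) > 0" using moebius_den_nz[OF a_in z1] by simp
  have D2: "(norm (1 - cnj a * z))\<^sup>2 \<le> 36 * h\<^sup>2"
  proof -
    have "(norm (1 - cnj a * z))\<^sup>2 \<le> (6 * h)\<^sup>2" using D D0 by (intro power_mono) auto
    then show ?thesis by (simp add: power2_eq_square)
  qed
  have "(1 - \<rho>) / (36 * h) \<le> (1 - (norm (Moebius_function 0 a z))\<^sup>2)"
  proof -
    have z2: "1 - \<rho> \<le> 1 - (norm z)\<^sup>2" using nz \<rho> by (simp add: power2_eq_square mult_le_one)
    have q: "1 / (36 * h) \<le> (1 - (norm a)\<^sup>2) / (norm (1 - cnj a * z))\<^sup>2"
    proof -
      have "1 / (36 * h) = h / (36 * h\<^sup>2)" using h by (simp add: power2_eq_square)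
      also have "\<dots> \<le> (1 - (norm a)\<^sup>2) / (36 * h\<^sup>2)" using one_minus_a2 h by (intro divide_right_mono) auto
      also have "\<dots> \<le> (1 - (norm a)\<^sup>2) / (norm (1 - cnj a * z))\<^sup>2"
        using D2 D0 one_minus_a2 h by (intro divide_left_mono) auto
      finally show ?thesis .
    qed
    have qn: "0 \<le> (1 - (norm a)\<^sup>2) / (norm (1 - cnj a * z))\<^sup>2"
      using one_minus_a2 h by (intro divide_nonneg_nonneg) auto
    have "(1 - \<rho>) / (36 * h) = (1 / (36 * h)) * (1 - \<rho>)" by simp
    also have "\<dots> \<le> ((1 - (norm a)\<^sup>2) / (norm (1 - cnj a * z))\<^sup>2) * (1 - (norm z)\<^sup>2)"
      using q z2 \<rho> h qn by (intro mult_mono) auto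
    finally show ?thesis unfolding id .
  qed
  then have "U a * ((1 - \<rho>) / (36 * h)) / 4 \<le> U a * (1 - (norm (Moebius_function 0 a z))\<^sup>2) / 4"
    using Ua_pos by (intro divide_right_mono mult_left_mono) auto
  then have "U a * ((1 - \<rho>) / (36 * h)) / 4 \<le> U z" using H by (rule order_trans)
  moreover have "U a * (1 - \<rho>) / (144 * h) = U a * ((1 - \<rho>) / (36 * h)) / 4" by (simp add: field_simps)
  ultimately show ?thesis unfolding z_def by linarith
qed

lemma upperU:
  assumes \<rho>: "1 - h \<le> \<rho>" "\<rho> < 1"
  shows "U (of_real \<rho> * a) \<le> 3 * U a"
proof -
  have \<rho>0: "0 \<le> \<rho>" using \<rho> h by simp
  have "\<rho> * norm a \<le> norm a" using \<rho> \<rho>0 by (intro mult_left_le_one_le) auto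
  then have z1: "norm (of_real \<rho> * a) < 1" using \<rho>0 a_in by (simp add: norm_mult)
  define t where "t = norm (Moebius_function 0 a (of_real \<rho> * a))"
  have t: "t \<le> 1/2" "0 \<le> t" unfolding t_def using geo_moeb_half[OF \<rho>] by auto
  have H: "U (of_real \<rho> * a) \<le> U a * (1 + t) / (1 - t)"
    unfolding U_def t_def by (rule harnack(2)[OF holo pos a_in z1]) simp
  have "(1 + t) / (1 - t) \<le> 3" using t by (simp add: field_simps)
  then have "U a * ((1 + t) / (1 - t)) \<le> U a * 3" using Ua_pos by (intro mult_left_mono) auto
  with H show ?thesis by (simp add: mult.commute)
qed

definition "Ub z = indicator (ball 0 1) z *\<^sub>R U z"

lemma Ub_meas[measurable]: "Ub \<in> borel_measurable borel"
  unfolding Ub_def by (rule borel_measurable_continuous_on_indicator) (auto intro: U_cont)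

lemma Ub_eq: "z \<in> ball 0 1 \<Longrightarrow> Ub z = U z" unfolding Ub_def by simp

lemma U_pos: "z \<in> ball 0 1 \<Longrightarrow> U z > 0" unfolding U_def using pos by simp

lemma in_ball_polar: "0 < \<rho> \<Longrightarrow> \<rho> < 1 \<Longrightarrow> of_real \<rho> * cis \<theta> \<in> ball 0 1"
  by (simp add: norm_mult)

lemma h_eq: "l / (2*pi) = h" unfolding h_def ..

lemma arc_bound:
  assumes \<rho>: "1 - h \<le> \<rho>" "\<rho> < 1" "0 < \<rho>"
  shows "(\<integral>\<^sup>+\<theta>. indicator {\<alpha>..\<alpha>+l} \<theta> * ennreal (U (of_real \<rho> * cis \<theta>)) \<partial>lborel) \<le> ennreal (150 * pi * h * U a)"
proof -
  have "(\<integral>\<^sup>+\<theta>. indicator {\<alpha>..\<alpha>+l} \<theta> * ennreal (U (of_real \<rho> * cis \<theta>)) \<partial>lborel) \<le>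
        (\<integral>\<^sup>+\<theta>. ennreal (25 * h) * (ennreal (Pk a \<theta> * Re (F (of_real \<rho> * cis \<theta>))) * indicator {\<alpha>..<\<alpha>+2*pi} \<theta>) \<partial>lborel)"
  proof (rule nn_integral_mono_AE)
    show "AE \<theta> in lborel. indicator {\<alpha>..\<alpha>+l} \<theta> * ennreal (U (of_real \<rho> * cis \<theta>)) \<le>
            ennreal (25 * h) * (ennreal (Pk a \<theta> * Re (F (of_real \<rho> * cis \<theta>))) * indicator {\<alpha>..<\<alpha>+2*pi} \<theta>)"
    proof (rule eventually_mono[OF AE_lborel_singleton[of "\<alpha>+2*pi"]])
      fix \<theta> :: real assume ne: "\<theta> \<noteq> \<alpha> + 2*pi"
      show "indicator {\<alpha>..\<alpha>+l} \<theta> * ennreal (U (of_real \<rho> * cis \<theta>)) \<le>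
            ennreal (25 * h) * (ennreal (Pk a \<theta> * Re (F (of_real \<rho> * cis \<theta>))) * indicator {\<alpha>..<\<alpha>+2*pi} \<theta>)"
      proof (cases "\<theta> \<in> {\<alpha>..\<alpha>+l}")
        case True
        then have w: "\<theta> \<in> {\<alpha>..<\<alpha>+2*pi}" using ne l by auto
        have Up: "0 < U (of_real \<rho> * cis \<theta>)" using U_pos in_ball_polar \<rho> by auto
        have "U (of_real \<rho> * cis \<theta>) = 1 * U (of_real \<rho> * cis \<theta>)" by simp
        also have "\<dots> \<le> (25 * h * Pk a \<theta>) * U (of_real \<rho> * cis \<theta>)"
          using geo_poisson[OF True] Up by (intro mult_right_mono) auto
        finally have le: "U (of_real \<rho> * cis \<theta>) \<le> 25 * h * (Pk a \<theta> * U (of_real \<rho> * cis \<theta>))" by simp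
        have "ennreal (U (of_real \<rho> * cis \<theta>)) \<le> ennreal (25 * h * (Pk a \<theta> * U (of_real \<rho> * cis \<theta>)))"
          using le by (rule ennreal_leI)
        also have "\<dots> = ennreal (25 * h) * ennreal (Pk a \<theta> * U (of_real \<rho> * cis \<theta>))"
          using h by (intro ennreal_mult') auto
        finally show ?thesis using True w unfolding U_def by simp
      qed simp
    qed
  qed
  also have "\<dots> = ennreal (25 * h) * (\<integral>\<^sup>+\<theta>. ennreal (Pk a \<theta> * Re (F (of_real \<rho> * cis \<theta>))) * indicator {\<alpha>..<\<alpha>+2*pi} \<theta> \<partial>lborel)"
  proof (rule nn_integral_cmult)
    have "(\<lambda>\<theta>. ennreal (Pk a \<theta> * Re (F (of_real \<rho> * cis \<theta>)))) \<in> borel_measurable borel"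
    proof -
      have "(\<lambda>\<theta>. Pk a \<theta> * Ub (of_real \<rho> * cis \<theta>)) \<in> borel_measurable borel"
        unfolding Pk_def by measurable
      moreover have "Pk a \<theta> * Ub (of_real \<rho> * cis \<theta>) = Pk a \<theta> * Re (F (of_real \<rho> * cis \<theta>))" for \<theta>
        using Ub_eq[OF in_ball_polar[OF \<rho>(3,2)]] unfolding U_def by simp
      ultimately show ?thesis by simp
    qed
    then show "(\<lambda>\<theta>. ennreal (Pk a \<theta> * Re (F (of_real \<rho> * cis \<theta>))) * indicator {\<alpha>..<\<alpha>+2*pi} \<theta>) \<in> borel_measurable lborel"
      by simp
  qed
  also have "\<dots> = ennreal (25 * h) * ennreal (2*pi * Re (F (of_real \<rho> * a)))"
    using poisson_nn[OF holo pos \<rho>(3) \<rho>(2) a_in] by simp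
  also have "\<dots> \<le> ennreal (25 * h) * ennreal (2*pi * (3 * U a))"
  proof -
    have "Re (F (of_real \<rho> * a)) \<le> 3 * U a" using upperU[OF \<rho>(1,2)] unfolding U_def .
    then show ?thesis by (intro mult_left_mono ennreal_leI) auto
  qed
  also have "\<dots> = ennreal (150 * pi * h * U a)"
    using h by (simp add: ennreal_mult'[symmetric] algebra_simps)
  finally show ?thesis .
qed

lemma int_U:
  "(\<integral>\<^sup>+z. ennreal (Ub z) * indicator (carleson_box \<alpha> l) z \<partial>lborel) \<le> ennreal (150 * pi * h\<^sup>2 * U a)"
proof -
  define G where "G p = indicator {\<alpha>..\<alpha>+l} (fst p) * (indicator {0<..<1} (snd p) * indicator {1-h..} (snd p) *
                         ennreal (Ub (of_real (snd p) * cis (fst p))))" for p :: "real \<times> real"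
  have [measurable]: "G \<in> borel_measurable (lborel \<Otimes>\<^sub>M lborel)" unfolding G_def by measurable
  have "(\<integral>\<^sup>+z. ennreal (Ub z) * indicator (carleson_box \<alpha> l) z \<partial>lborel) =
        (\<integral>\<^sup>+\<theta>. indicator {\<alpha>..\<alpha>+l} \<theta> *
            (\<integral>\<^sup>+\<rho>. indicator {0<..<1} \<rho> * indicator {1 - h..} \<rho> * ennreal \<rho> * ennreal (Ub (of_real \<rho> * cis \<theta>)) \<partial>lborel) \<partial>lborel)"
    using box_polar[of "\<lambda>z. ennreal (Ub z)", OF _ l] unfolding h_eq by simp
  also have "\<dots> \<le> (\<integral>\<^sup>+\<theta>. \<integral>\<^sup>+\<rho>. G (\<theta>, \<rho>) \<partial>lborel \<partial>lborel)"
  proof (rule nn_integral_mono)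
    fix \<theta> :: real
    have "indicator {\<alpha>..\<alpha>+l} \<theta> * (\<integral>\<^sup>+\<rho>. indicator {0<..<1} \<rho> * indicator {1 - h..} \<rho> * ennreal \<rho> * ennreal (Ub (of_real \<rho> * cis \<theta>)) \<partial>lborel)
          = (\<integral>\<^sup>+\<rho>. indicator {\<alpha>..\<alpha>+l} \<theta> * (indicator {0<..<1} \<rho> * indicator {1 - h..} \<rho> * ennreal \<rho> * ennreal (Ub (of_real \<rho> * cis \<theta>))) \<partial>lborel)"
      by (rule nn_integral_cmult[symmetric]) measurable
    also have "\<dots> \<le> (\<integral>\<^sup>+\<rho>. G (\<theta>, \<rho>) \<partial>lborel)"
    proof (rule nn_integral_mono)
      fix \<rho> :: real
      show "indicator {\<alpha>..\<alpha>+l} \<theta> * (indicator {0<..<1} \<rho> * indicator {1 - h..} \<rho> * ennreal \<rho> * ennreal (Ub (of_real \<rho> * cis \<theta>))) \<le> G (\<theta>, \<rho>)"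
      proof (cases "\<rho> \<in> {0<..<1}")
        case True
        then have "ennreal \<rho> * ennreal (Ub (of_real \<rho> * cis \<theta>)) \<le> 1 * ennreal (Ub (of_real \<rho> * cis \<theta>))"
          by (intro mult_right_mono) auto
        then show ?thesis unfolding G_def by (auto simp: indicator_def mult.assoc)
      qed (simp add: G_def)
    qed
    finally show "indicator {\<alpha>..\<alpha>+l} \<theta> * (\<integral>\<^sup>+\<rho>. indicator {0<..<1} \<rho> * indicator {1 - h..} \<rho> * ennreal \<rho> * ennreal (Ub (of_real \<rho> * cis \<theta>)) \<partial>lborel)
          \<le> (\<integral>\<^sup>+\<rho>. G (\<theta>, \<rho>) \<partial>lborel)" .
  qed
  also have "\<dots> = (\<integral>\<^sup>+\<rho>. \<integral>\<^sup>+\<theta>. G (\<theta>, \<rho>) \<partial>lborel \<partial>lborel)"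
    by (rule lborel_pair.Fubini'[symmetric]) simp
  also have "\<dots> \<le> (\<integral>\<^sup>+\<rho>. ennreal (150 * pi * h * U a) * indicator {1-h..1} \<rho> \<partial>lborel)"
  proof (rule nn_integral_mono)
    fix \<rho> :: real
    show "(\<integral>\<^sup>+\<theta>. G (\<theta>, \<rho>) \<partial>lborel) \<le> ennreal (150 * pi * h * U a) * indicator {1-h..1} \<rho>"
    proof (cases "\<rho> \<in> {0<..<1} \<and> 1 - h \<le> \<rho>")
      case True
      have "(\<integral>\<^sup>+\<theta>. G (\<theta>, \<rho>) \<partial>lborel) = (\<integral>\<^sup>+\<theta>. indicator {\<alpha>..\<alpha>+l} \<theta> * ennreal (U (of_real \<rho> * cis \<theta>)) \<partial>lborel)"
        using True Ub_eq[OF in_ball_polar] unfolding G_def by (intro nn_integral_cong) (auto simp: indicator_def)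
      also have "\<dots> \<le> ennreal (150 * pi * h * U a)" using True by (intro arc_bound) auto
      finally show ?thesis using True by simp
    next
      case False
      then have "G (\<theta>, \<rho>) = 0" for \<theta> unfolding G_def by (auto simp: indicator_def)
      then show ?thesis by simp
    qed
  qed
  also have "\<dots> = ennreal (150 * pi * h * U a) * ennreal h"
    using h by (simp add: nn_integral_cmult_indicator)
  also have "\<dots> = ennreal (150 * pi * h\<^sup>2 * U a)"
    using h Ua_pos by (simp add: ennreal_mult'[symmetric] power2_eq_square mult_ac)
  finally show ?thesis .
qed

lemma int_V:
  assumes s: "0 < s" "s < 1"
  shows "(\<integral>\<^sup>+z. ennreal (Ub z powr (-s)) * indicator (carleson_box \<alpha> l) z \<partial>lborel) \<le>
         ennreal (l * ((U a / (144 * h)) powr (-s) * (h powr (1 - s) / (1 - s))))"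
proof -
  define K where "K = (U a / (144 * h)) powr (-s)"
  have K0: "0 \<le> K" unfolding K_def by simp
  have "(\<integral>\<^sup>+z. ennreal (Ub z powr (-s)) * indicator (carleson_box \<alpha> l) z \<partial>lborel) =
        (\<integral>\<^sup>+\<theta>. indicator {\<alpha>..\<alpha>+l} \<theta> *
            (\<integral>\<^sup>+\<rho>. indicator {0<..<1} \<rho> * indicator {1 - h..} \<rho> * ennreal \<rho> * ennreal (Ub (of_real \<rho> * cis \<theta>) powr (-s)) \<partial>lborel) \<partial>lborel)"
    using box_polar[of "\<lambda>z. ennreal (Ub z powr (-s))", OF _ l] unfolding h_eq by simp
  also have "\<dots> \<le> (\<integral>\<^sup>+\<theta>. ennreal (K * (h powr (1 - s) / (1 - s))) * indicator {\<alpha>..\<alpha>+l} \<theta> \<partial>lborel)"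
  proof (rule nn_integral_mono)
    fix \<theta> :: real
    show "indicator {\<alpha>..\<alpha>+l} \<theta> *
            (\<integral>\<^sup>+\<rho>. indicator {0<..<1} \<rho> * indicator {1 - h..} \<rho> * ennreal \<rho> * ennreal (Ub (of_real \<rho> * cis \<theta>) powr (-s)) \<partial>lborel)
          \<le> ennreal (K * (h powr (1 - s) / (1 - s))) * indicator {\<alpha>..\<alpha>+l} \<theta>"
    proof (cases "\<theta> \<in> {\<alpha>..\<alpha>+l}")
      case True
      have "(\<integral>\<^sup>+\<rho>. indicator {0<..<1} \<rho> * indicator {1 - h..} \<rho> * ennreal \<rho> * ennreal (Ub (of_real \<rho> * cis \<theta>) powr (-s)) \<partial>lborel)
            \<le> (\<integral>\<^sup>+\<rho>. ennreal K * (ennreal ((1 - \<rho>) powr (-s)) * indicator {1-h..<1} \<rho>) \<partial>lborel)"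
      proof (rule nn_integral_mono)
        fix \<rho> :: real
        show "indicator {0<..<1} \<rho> * indicator {1 - h..} \<rho> * ennreal \<rho> * ennreal (Ub (of_real \<rho> * cis \<theta>) powr (-s))
              \<le> ennreal K * (ennreal ((1 - \<rho>) powr (-s)) * indicator {1-h..<1} \<rho>)"
        proof (cases "\<rho> \<in> {0<..<1} \<and> 1 - h \<le> \<rho>")
          case True
          have z: "of_real \<rho> * cis \<theta> \<in> ball 0 1" using True in_ball_polar by auto
          have low: "U a * (1 - \<rho>) / (144 * h) \<le> U (of_real \<rho> * cis \<theta>)"
            using lowerU[OF \<open>\<theta> \<in> {\<alpha>..\<alpha>+l}\<close>] True by auto
          have xpos: "0 < U a * (1 - \<rho>) / (144 * h)" using Ua_pos True h by simp
          have "U (of_real \<rho> * cis \<theta>) powr (-s) \<le> (U a * (1 - \<rho>) / (144 * h)) powr (-s)"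
            using s xpos low by (intro powr_mono2') auto
          also have "(U a * (1 - \<rho>) / (144 * h)) = (U a / (144 * h)) * (1 - \<rho>)" by simp
          also have "((U a / (144 * h)) * (1 - \<rho>)) powr (-s) = K * (1 - \<rho>) powr (-s)"
            unfolding K_def using Ua_pos h True by (intro powr_mult)
          finally have b1: "U (of_real \<rho> * cis \<theta>) powr (-s) \<le> K * (1 - \<rho>) powr (-s)" .
          have "\<rho> * U (of_real \<rho> * cis \<theta>) powr (-s) \<le> 1 * U (of_real \<rho> * cis \<theta>) powr (-s)"
            using True by (intro mult_right_mono) auto
          with b1 have b2: "\<rho> * U (of_real \<rho> * cis \<theta>) powr (-s) \<le> K * (1 - \<rho>) powr (-s)" by simp
          have "ennreal \<rho> * ennreal (Ub (of_real \<rho> * cis \<theta>) powr (-s)) = ennreal (\<rho> * U (of_real \<rho> * cis \<theta>) powr (-s))"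
            using True Ub_eq[OF z] by (simp add: ennreal_mult')
          also have "\<dots> \<le> ennreal (K * (1 - \<rho>) powr (-s))" using b2 by (rule ennreal_leI)
          also have "\<dots> = ennreal K * ennreal ((1 - \<rho>) powr (-s))" using K0 by (rule ennreal_mult')
          finally show ?thesis using True by (simp add: indicator_def mult.assoc)
        next
          case False
          then show ?thesis by (auto simp: indicator_def)
        qed
      qed
      also have "\<dots> = ennreal K * (\<integral>\<^sup>+\<rho>. ennreal ((1 - \<rho>) powr (-s)) * indicator {1-h..<1} \<rho> \<partial>lborel)"
        by (rule nn_integral_cmult) measurable
      also have "\<dots> = ennreal K * ennreal (h powr (1 - s) / (1 - s))"
        using nn_integral_one_minus_powr[OF h(1) s] by simp
      also have "\<dots> = ennreal (K * (h powr (1 - s) / (1 - s)))"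
        using K0 by (rule ennreal_mult'[symmetric])
      finally show ?thesis using True by simp
    qed simp
  qed
  also have "\<dots> = ennreal (K * (h powr (1 - s) / (1 - s))) * ennreal l"
    using l by (simp add: nn_integral_cmult_indicator)
  also have "\<dots> = ennreal (l * (K * (h powr (1 - s) / (1 - s))))"
    using K0 s l by (simp add: ennreal_mult'[symmetric] mult.commute)
  finally show ?thesis unfolding K_def .
qed

lemma measure_box: "emeasure lborel (carleson_box \<alpha> l) = ennreal (l * ((1 - (1 - h)\<^sup>2) / 2))"
proof -
  have "emeasure lborel (carleson_box \<alpha> l) = (\<integral>\<^sup>+z. 1 * indicator (carleson_box \<alpha> l) z \<partial>lborel)"
    by simp
  also have "\<dots> = (\<integral>\<^sup>+\<theta>. indicator {\<alpha>..\<alpha>+l} \<theta> *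
            (\<integral>\<^sup>+\<rho>. indicator {0<..<1} \<rho> * indicator {1 - h..} \<rho> * ennreal \<rho> * 1 \<partial>lborel) \<partial>lborel)"
    using box_polar[of "\<lambda>z. 1", OF _ l] unfolding h_eq by simp
  also have "(\<integral>\<^sup>+\<rho>. indicator {0<..<1} \<rho> * indicator {1 - h..} \<rho> * ennreal \<rho> * 1 \<partial>lborel) =
             (\<integral>\<^sup>+\<rho>. ennreal \<rho> * indicator {1-h..1} \<rho> \<partial>lborel)"
  proof (rule nn_integral_cong_AE)
    show "AE \<rho> in lborel. indicator {0<..<1} \<rho> * indicator {1 - h..} \<rho> * ennreal \<rho> * 1 = ennreal \<rho> * indicator {1-h..1} \<rho>"
    proof (rule eventually_mono[OF AE_lborel_singleton[of 1]])
      fix \<rho> :: real assume "\<rho> \<noteq> 1"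
      then show "indicator {0<..<1} \<rho> * indicator {1 - h..} \<rho> * ennreal \<rho> * 1 = ennreal \<rho> * indicator {1-h..1} \<rho>"
        using h by (cases "\<rho> = 0") (auto simp: indicator_def)
    qed
  qed
  also have "\<dots> = ennreal ((1 - (1 - h)\<^sup>2) / 2)" by (rule nn_integral_id_interval[OF h])
  also have "(\<integral>\<^sup>+\<theta>. indicator {\<alpha>..\<alpha>+l} \<theta> * ennreal ((1 - (1 - h)\<^sup>2) / 2) \<partial>lborel) =
             ennreal ((1 - (1 - h)\<^sup>2) / 2) * ennreal l"
    using l by (subst mult.commute) (simp add: nn_integral_cmult_indicator)
  also have "\<dots> = ennreal (l * ((1 - (1 - h)\<^sup>2) / 2))"
  proof -
    have "0 \<le> (1 - (1 - h)\<^sup>2) / 2" using h by (simp add: power_le_one)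
    then have "ennreal ((1 - (1 - h)\<^sup>2) / 2) * ennreal l = ennreal (((1 - (1 - h)\<^sup>2) / 2) * l)"
      by (rule ennreal_mult'[symmetric])
    then show ?thesis by (simp only: mult.commute)
  qed
  finally show ?thesis .
qed

end

lemma final_numeric:
  fixes p s Ua h X Y A0 :: real
  assumes p: "p > 2" and s: "s = 1 / (p - 1)" and Ua: "Ua > 0" and h: "0 < h" "h \<le> 1"
    and X: "0 \<le> X" "X \<le> 150 * pi * h\<^sup>2 * Ua"
    and Y: "0 \<le> Y" "Y \<le> (2 * pi * h) * ((Ua / (144 * h)) powr (-s) * (h powr (1 - s) / (1 - s)))"
    and A0: "A0 = (2 * pi * h) * ((1 - (1 - h)\<^sup>2) / 2)"
  shows "(X / A0) * (Y / A0) powr (p - 1) \<le> 150 * (2 * 144 powr s / (1 - s)) powr (p - 1)"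
proof -
  have s01: "0 < s" "s < 1" unfolding s using p by (simp_all add: divide_less_eq)
  have sp: "s * (p - 1) = 1" using p s by simp
  have A0ge: "pi * h\<^sup>2 \<le> A0"
  proof -
    have "A0 = pi * h\<^sup>2 * (2 - h)" unfolding A0 by (simp add: power2_eq_square field_simps)
    moreover have "pi * h\<^sup>2 * 1 \<le> pi * h\<^sup>2 * (2 - h)" using h by (intro mult_left_mono) auto
    ultimately show ?thesis by simp
  qed
  have ph: "0 < pi * h\<^sup>2" using h by simp
  have A0p: "0 < A0" using A0ge ph by linarith
  have XA: "X / A0 \<le> 150 * Ua"
  proof -
    have "X / A0 \<le> (150 * pi * h\<^sup>2 * Ua) / A0" using X A0p by (intro divide_right_mono) auto
    also have "\<dots> \<le> (150 * pi * h\<^sup>2 * Ua) / (pi * h\<^sup>2)" using A0ge ph Ua by (intro divide_left_mono) auto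
    also have "\<dots> = 150 * Ua" using h by (simp add: field_simps)
    finally show ?thesis .
  qed
  define c where "c = 2 * 144 powr s / (1 - s)"
  have c0: "0 \<le> c" unfolding c_def using s01 by simp
  have Yb: "(2 * pi * h) * ((Ua / (144 * h)) powr (-s) * (h powr (1 - s) / (1 - s))) = pi * h\<^sup>2 * (c / Ua powr s)"
  proof -
    have "(Ua / (144 * h)) powr (-s) = 144 powr s * h powr s / Ua powr s"
      using Ua h by (simp add: powr_minus powr_divide powr_mult field_simps)
    moreover have "h powr s * h powr (1 - s) = h"
      using h by (simp add: powr_add[symmetric])
    moreover have "\<And>A B E G. B > 0 \<Longrightarrow> E * G = h \<Longrightarrow>
        (2 * pi * h) * (A * E / B * (G / (1 - s))) = pi * h\<^sup>2 * (2 * A / (1 - s) / B)"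
    proof -
      fix A B E G :: real assume B: "B > 0" and EG: "E * G = h"
      have "(2 * pi * h) * (A * E / B * (G / (1 - s))) = (2 * pi * h) * (A * (E * G) / B / (1 - s))"
        by (simp add: field_simps)
      also have "\<dots> = pi * h\<^sup>2 * (2 * A / (1 - s) / B)" unfolding EG by (simp add: power2_eq_square field_simps)
      finally show "(2 * pi * h) * (A * E / B * (G / (1 - s))) = pi * h\<^sup>2 * (2 * A / (1 - s) / B)" .
    qed
    ultimately show ?thesis unfolding c_def using Ua by simp
  qed
  have YA: "Y / A0 \<le> c / Ua powr s"
  proof -
    have "Y / A0 \<le> (pi * h\<^sup>2 * (c / Ua powr s)) / A0" using Y Yb A0p by (intro divide_right_mono) auto
    also have "\<dots> \<le> (pi * h\<^sup>2 * (c / Ua powr s)) / (pi * h\<^sup>2)"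
      using A0ge ph c0 Ua by (intro divide_left_mono) auto
    also have "\<dots> = c / Ua powr s" using h by simp
    finally show ?thesis .
  qed
  have "(Y / A0) powr (p - 1) \<le> (c / Ua powr s) powr (p - 1)"
    using YA Y A0p p by (intro powr_mono2) auto
  also have "\<dots> = c powr (p - 1) / Ua"
    using Ua sp by (simp add: powr_divide powr_powr)
  finally have YP: "(Y / A0) powr (p - 1) \<le> c powr (p - 1) / Ua" .
  have "(X / A0) * (Y / A0) powr (p - 1) \<le> (150 * Ua) * (c powr (p - 1) / Ua)"
    using XA YP X A0p Ua by (intro mult_mono) auto
  also have "\<dots> = 150 * c powr (p - 1)" using Ua by simp
  finally show ?thesis unfolding c_def .
qed

context boxF
begin

lemma set_part:
  fixes f :: "complex \<Rightarrow> real" and g :: "complex \<Rightarrow> real" and B :: real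
  assumes eq: "\<And>z. z \<in> carleson_box \<alpha> l \<Longrightarrow> f z = g z"
    and gm[measurable]: "g \<in> borel_measurable borel"
    and gnn: "\<And>z. z \<in> carleson_box \<alpha> l \<Longrightarrow> 0 \<le> g z"
    and bnd: "(\<integral>\<^sup>+z. ennreal (g z) * indicator (carleson_box \<alpha> l) z \<partial>lborel) \<le> ennreal B"
    and B: "0 \<le> B"
  shows "set_integrable lborel (carleson_box \<alpha> l) f" "0 \<le> (LINT z:carleson_box \<alpha> l|lborel. f z)"
        "(LINT z:carleson_box \<alpha> l|lborel. f z) \<le> B"
proof -
  let ?Q = "carleson_box \<alpha> l"
  have fe: "(\<lambda>z. indicator ?Q z *\<^sub>R f z) = (\<lambda>z. indicator ?Q z *\<^sub>R g z)"
    using eq by (auto simp: fun_eq_iff indicator_def)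
  have m: "(\<lambda>z. indicator ?Q z *\<^sub>R g z) \<in> borel_measurable lborel" by measurable
  have nn: "AE z in lborel. 0 \<le> indicator ?Q z *\<^sub>R g z" using gnn by (auto simp: indicator_def)
  have ne: "(\<integral>\<^sup>+z. ennreal (indicator ?Q z *\<^sub>R g z) \<partial>lborel) = (\<integral>\<^sup>+z. ennreal (g z) * indicator ?Q z \<partial>lborel)"
    by (intro nn_integral_cong) (auto simp: indicator_def)
  have fin: "(\<integral>\<^sup>+z. ennreal (indicator ?Q z *\<^sub>R g z) \<partial>lborel) < \<infinity>"
    unfolding ne using bnd by (simp add: le_less_trans)
  have int: "integrable lborel (\<lambda>z. indicator ?Q z *\<^sub>R g z)"
    by (rule integrableI_nonneg[OF m nn fin])
  then show "set_integrable lborel ?Q f" unfolding set_integrable_def fe .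
  have L: "(LINT z:?Q|lborel. f z) = enn2real (\<integral>\<^sup>+z. ennreal (indicator ?Q z *\<^sub>R g z) \<partial>lborel)"
    unfolding set_lebesgue_integral_def fe by (rule integral_eq_nn_integral[OF m nn])
  show "0 \<le> (LINT z:?Q|lborel. f z)" unfolding L by simp
  show "(LINT z:?Q|lborel. f z) \<le> B" unfolding L ne using bnd B by (intro enn2real_leI)
qed

lemma box_main:
  fixes u :: "complex \<Rightarrow> real"
  assumes ueq: "\<And>z. z \<in> ball 0 1 \<Longrightarrow> u z = U z" and p: "p > 2"
  shows "set_integrable lborel (carleson_box \<alpha> l) u \<and>
         set_integrable lborel (carleson_box \<alpha> l) (\<lambda>z. u z powr (- 1 / (p - 1))) \<and>
         avgA (carleson_box \<alpha> l) u * (avgA (carleson_box \<alpha> l) (\<lambda>z. u z powr (- 1 / (p - 1)))) powr (p - 1)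
           \<le> 150 * (2 * 144 powr (1 / (p - 1)) / (1 - 1 / (p - 1))) powr (p - 1)"
proof -
  let ?Q = "carleson_box \<alpha> l"
  define s where "s = 1 / (p - 1)"
  have s01: "0 < s" "s < 1" unfolding s_def using p by (simp_all add: divide_less_eq)
  have ms: "- 1 / (p - 1) = - s" unfolding s_def by simp
  have inB: "z \<in> ball 0 1" if "z \<in> ?Q" for z using carleson_box_sub[of \<alpha> l] that by blast
  have e1: "u z = Ub z" if "z \<in> ?Q" for z using ueq Ub_eq inB that by simp
  have e2: "u z powr (- 1 / (p - 1)) = Ub z powr (-s)" if "z \<in> ?Q" for z using e1[OF that] ms by simp
  have Ubp: "0 \<le> Ub z" if "z \<in> ?Q" for z using Ub_eq U_pos inB that by (simp add: less_imp_le)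
  define B1 where "B1 = 150 * pi * h\<^sup>2 * U a"
  define B2 where "B2 = l * ((U a / (144 * h)) powr (-s) * (h powr (1 - s) / (1 - s)))"
  have B1: "0 \<le> B1" unfolding B1_def using Ua_pos by simp
  have B2: "0 \<le> B2" unfolding B2_def using l s01 by simp
  note P1 = set_part[OF e1 Ub_meas Ubp int_U[folded B1_def] B1]
  have Vm: "(\<lambda>z. Ub z powr (-s)) \<in> borel_measurable borel" by measurable
  note P2 = set_part[OF e2 Vm _ int_V[OF s01, folded B2_def] B2]
  have meas: "measure lborel ?Q = l * ((1 - (1 - h)\<^sup>2) / 2)"
  proof -
    have "0 \<le> l * ((1 - (1 - h)\<^sup>2) / 2)" using l h by (simp add: power_le_one)
    then show ?thesis unfolding measure_def measure_box by simp
  qed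
  define A0 where "A0 = l * ((1 - (1 - h)\<^sup>2) / 2)"
  have avg: "avgA ?Q f = (LINT z:?Q|lborel. f z) / A0" for f
    unfolding avgA_def areaA_def meas A0_def by simp
  have "avgA ?Q u * (avgA ?Q (\<lambda>z. u z powr (- 1 / (p - 1)))) powr (p - 1) \<le> 150 * (2 * 144 powr s / (1 - s)) powr (p - 1)"
    unfolding avg
  proof (rule final_numeric[OF p s_def Ua_pos h])
    show "0 \<le> (LINT z:?Q|lborel. u z)" "(LINT z:?Q|lborel. u z) \<le> 150 * pi * h\<^sup>2 * U a"
      using P1(2,3) unfolding B1_def by auto
    show "0 \<le> (LINT z:?Q|lborel. u z powr (- 1 / (p - 1)))"
      "(LINT z:?Q|lborel. u z powr (- 1 / (p - 1))) \<le> (2 * pi * h) * ((U a / (144 * h)) powr (-s) * (h powr (1 - s) / (1 - s)))"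
      using P2(2,3) unfolding B2_def l_eq[symmetric] by auto
    show "A0 = (2 * pi * h) * ((1 - (1 - h)\<^sup>2) / 2)" unfolding A0_def l_eq[symmetric] ..
  qed
  then show ?thesis using P1(1) P2(1) unfolding s_def by simp
qed

end

theorem mainTheorem14:
  fixes u :: "complex \<Rightarrow> real"
  assumes "harmonic_on (ball 0 1) u"
    and "\<forall>z\<in>ball 0 1. u z > 0"
  shows "\<forall>p::real. p > 2 \<longrightarrow> bekolle_bonami p u"
proof (intro allI impI)
  fix p :: real assume p: "p > 2"
  obtain F where holo: "F holomorphic_on ball 0 1" and re: "\<And>z. z \<in> ball 0 1 \<Longrightarrow> Re (F z) = u z"
    using harmonic_re_holo[OF assms(1)] by blast
  have pos: "\<And>z. z \<in> ball 0 1 \<Longrightarrow> Re (F z) > 0" using re assms(2) by simp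
  show "bekolle_bonami p u"
    unfolding bekolle_bonami_def
  proof (intro exI allI impI)
    fix Q assume "is_carleson_box Q"
    then obtain \<alpha> l where l: "0 < l" "l \<le> 2 * pi" and Q: "Q = carleson_box \<alpha> l"
      unfolding is_carleson_box_def by blast
    interpret boxF \<alpha> l F
      by unfold_locales (use l holo pos in auto)
    have ueq: "\<And>z. z \<in> ball 0 1 \<Longrightarrow> u z = U z" unfolding U_def using re by simp
    show "set_integrable lborel Q u \<and> set_integrable lborel Q (\<lambda>z. u z powr (- 1 / (p - 1))) \<and>
          avgA Q u * avgA Q (\<lambda>z. u z powr (- 1 / (p - 1))) powr (p - 1)
            \<le> 150 * (2 * 144 powr (1 / (p - 1)) / (1 - 1 / (p - 1))) powr (p - 1)"
      unfolding Q by (rule box_main[OF ueq p])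
  qed
qed

end
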